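(* Let $\{P_n\}_{n\ge0}$ be polynomials with $P_n$ monic of degree $n$ and $P_n(0)=0$ for $n\ge1$ (so $P_0=1$). Let $H(x,z)=\sum_{n\ge0}P_n(x)z^n$, let $A$ be the linear operator on $\mathbb C[x]$ with $AP_n=P_{n-1}$ ($P_{-1}=0$), and $W$ the linear operator with $Wx^n=P_n$. Define on $\mathbb C[x]$ the linear operators $D f(x)=\frac{f(x)-f(0)}{x}$, $E^af(x)=\frac{xf(x)-af(a)}{x-a}$ ($a\in\mathbb R$), and $\Delta:\mathbb C[x]\to\mathbb C[x]\otimes\mathbb C[x]\cong\mathbb C[x,y]$, $\Delta(f)(x,y)=\frac{xf(x)-yf(y)}{x-y}$. Let $\Delta_\ast:\mathbb C[x]\to\mathbb C[x]\ast\mathbb C[x]\cong\mathbb C\langle x,y\rangle$ be the algebra homomorphism $\Delta_\ast(f)(x,y)=f(x+y)$. Then the following conditions are all equivalent: (a) $\Delta W=(W\otimes W)\Delta$; (b) $\Delta(P_n)(x,y)=\sum_{k=0}^nP_k(x)P_{n-k}(y)$ for all $n\ge0$; (c) $\Delta(H)=H\otimes H$, i.e. $\Delta(H)(x,y,z)=H(x,z)H(y,z)$; (d) $H(x,z)=\frac{1}{1-u(z)x}$ for some formal power series $u$ with $u(0)=0$, $u'(0)=1$; (e) $DH(x,z)=u(z)H(x,z)$ for some such $u$; (f) $A=u^{-1}(D)$ for some such $u$ ($u^{-1}$ the compositional inverse); (g) $A$ commutes with $D$; (h) $A$ commutes with $E^a$ for all $a$; (i) $(A\otimes I)\Delta=\Delta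 A$; (j) $\Delta_\ast W=(W\ast W)\Delta_\ast$; (k) for all $n\ge1$, in $\mathbb C\langle x,y\rangle$, \[P_n(x+y)=\sum_{k=1}^n\sum_{\substack{i(1),\dots,i(k)\ge1\\ i(1)+\dots+i(k)=n}}\bigl(P_{i(1)}(x)P_{i(2)}(y)P_{i(3)}(x)P_{i(4)}(y)\cdots+P_{i(1)}(y)P_{i(2)}(x)P_{i(3)}(y)P_{i(4)}(x)\cdots\bigr)\] (each product having $k$ alternating factors); (l) $H(x+y,z)=\frac{H(x,z)H(y,z)}{H(x,z)+H(y,z)-H(x,z)H(y,z)}$.
   Context: $\mathbb C[x]\ast\mathbb C[x]$ is the algebraic free product of unital algebras (amalgamated over the unit), identified with the noncommutative polynomial algebra $\mathbb C\langle x,y\rangle$ in $x$ and $y$. For unital linear operators $W_1,W_2$ on algebras $\mathcal A_1,\mathcal A_2$, $W_1\ast W_2$ is the unital operator on $\mathcal A_1\ast\mathcal A_2$ with $(W_1\ast W_2)(a_1a_2\cdots a_n)=(W_{i(1)}a_1)\cdots(W_{i(n)}a_n)$ whenever $a_j\in\mathcal A_{i(j)}\setminus\mathbb C$ and $i(j)\ne i(j+1)$. Operators act on generating functions coefficientwise in $z$. This is the case $[n]_\beta=1$ ($n\ge1$) of a general $\beta$-framework, in which $D$, $E^a$, $\Delta$, $\exp_\beta(z)=\frac1{1-z}$ are the corresponding $\beta$-derivative, $\beta$-translation, $\beta$-coproduct and $\beta$-exponential. *)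

theory Defs
  imports "HOL-Computational_Algebra.Computational_Algebra"
begin

definition lin_op :: "(complex poly \<Rightarrow> complex poly) \<Rightarrow> bool" where
  "lin_op T \<longleftrightarrow> (\<forall>f g. T (f + g) = T f + T g) \<and> (\<forall>c f. T (smult c f) = smult c (T f))"

definition Dop :: "complex poly \<Rightarrow> complex poly" where
  "Dop f = (f - [:poly f 0:]) div [:0, 1:]"

definition Eop :: "real \<Rightarrow> complex poly \<Rightarrow> complex poly" where
  "Eop a f = ([:0, 1:] * f - [:of_real a * poly f (of_real a):]) div [:- of_real a, 1:]"

text \<open>Operator g(T) for a formal power series g and a locally nilpotent operator T
  (used with T = D, for which D^n f = 0 when n > degree f).\<close>
definition fps_op :: "complex fps \<Rightarrow> (complex poly \<Rightarrow> complex poly) \<Rightarrow> complex poly \<Rightarrow> complex poly" where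
  "fps_op g T f = (\<Sum>n\<le>degree f. smult (g $ n) ((T ^^ n) f))"

section \<open>C[x,y] = C[x] (x) C[x], represented as complex poly poly
  (outer variable y, inner variable x)\<close>

definition embX :: "complex poly \<Rightarrow> complex poly poly" where
  "embX f = [:f:]"

definition embY :: "complex poly \<Rightarrow> complex poly poly" where
  "embY f = map_poly (\<lambda>c. [:c:]) f"

definition varX :: "complex poly poly" where "varX = embX [:0, 1:]"
definition varY :: "complex poly poly" where "varY = embY [:0, 1:]"

definition Delta :: "complex poly \<Rightarrow> complex poly poly" where
  "Delta f = (varX * embX f - varY * embY f) div (varX - varY)"

definition tens :: "(complex poly \<Rightarrow> complex poly) \<Rightarrow> (complex poly \<Rightarrow> complex poly)
    \<Rightarrow> complex poly poly \<Rightarrow> complex poly poly" where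
  "tens S T q = (\<Sum>j\<le>degree q. \<Sum>i\<le>degree (coeff q j).
      smult [:coeff (coeff q j) i:] (embX (S (monom 1 i)) * embY (T (monom 1 j))))"

definition eval_sum2 :: "complex poly \<Rightarrow> complex poly poly" where
  "eval_sum2 f = poly (map_poly (\<lambda>c. [:[:c:]:]) f) (varX + varY)"

section \<open>C<x,y> (noncommutative polynomials), elements as coefficient functions on words;
  letter False = x, letter True = y\<close>

type_synonym ncpoly = "bool list \<Rightarrow> complex"

definition nc_one :: ncpoly where "nc_one = (\<lambda>w. if w = [] then 1 else 0)"
definition nc_var :: "bool \<Rightarrow> ncpoly" where "nc_var b = (\<lambda>w. if w = [b] then 1 else 0)"
definition nc_add :: "ncpoly \<Rightarrow> ncpoly \<Rightarrow> ncpoly" where "nc_add p q = (\<lambda>w. p w + q w)"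
definition nc_smult :: "complex \<Rightarrow> ncpoly \<Rightarrow> ncpoly" where "nc_smult c p = (\<lambda>w. c * p w)"
definition nc_mult :: "ncpoly \<Rightarrow> ncpoly \<Rightarrow> ncpoly" where
  "nc_mult p q = (\<lambda>w. \<Sum>i\<le>length w. p (take i w) * q (drop i w))"
definition nc_sum :: "'a set \<Rightarrow> ('a \<Rightarrow> ncpoly) \<Rightarrow> ncpoly" where
  "nc_sum S g = (\<lambda>w. \<Sum>s\<in>S. g s w)"

fun nc_pow :: "ncpoly \<Rightarrow> nat \<Rightarrow> ncpoly" where
  "nc_pow p 0 = nc_one"
| "nc_pow p (Suc n) = nc_mult p (nc_pow p n)"

definition nc_eval :: "complex poly \<Rightarrow> ncpoly \<Rightarrow> ncpoly" where
  "nc_eval f t = nc_sum {..degree f} (\<lambda>n. nc_smult (coeff f n) (nc_pow t n))"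

definition nc_emb :: "bool \<Rightarrow> complex poly \<Rightarrow> ncpoly" where
  "nc_emb b f = nc_eval f (nc_var b)"

definition Delta_ast :: "complex poly \<Rightarrow> ncpoly" where
  "Delta_ast f = nc_eval f (nc_add (nc_var False) (nc_var True))"

text \<open>Image under W1 * W2 of a basis word x^{k1} y^{k2} x^{k3} ... (maximal runs, k_j \<ge> 1):
  W_{i(1)}(x^{k1}) W_{i(2)}(x^{k2}) ... (placed in the respective copies).\<close>
function word_img :: "(complex poly \<Rightarrow> complex poly) \<Rightarrow> (complex poly \<Rightarrow> complex poly)
    \<Rightarrow> bool list \<Rightarrow> ncpoly" where
  "word_img W1 W2 [] = nc_one"
| "word_img W1 W2 (b # w) =
     nc_mult (nc_emb b ((if b then W2 else W1) (monom 1 (Suc (length (takeWhile (\<lambda>c. c = b) w))))))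
             (word_img W1 W2 (dropWhile (\<lambda>c. c = b) w))"
  by pat_completeness auto
termination
  by (relation "measure (\<lambda>(_, _, w). length w)") (auto simp: le_imp_less_Suc length_dropWhile_le)

text \<open>The free product operator W1 * W2 on C<x,y>, extended linearly from the basis words
  (applied to finitely supported elements).\<close>
definition free_op :: "(complex poly \<Rightarrow> complex poly) \<Rightarrow> (complex poly \<Rightarrow> complex poly)
    \<Rightarrow> ncpoly \<Rightarrow> ncpoly" where
  "free_op W1 W2 p = nc_sum {w. p w \<noteq> 0} (\<lambda>w. nc_smult (p w) (word_img W1 W2 w))"

fun alt_prod :: "(nat \<Rightarrow> complex poly) \<Rightarrow> bool \<Rightarrow> nat list \<Rightarrow> ncpoly" where
  "alt_prod P b [] = nc_one"
| "alt_prod P b (i # is) = nc_mult (nc_emb b (P i)) (alt_prod P (\<not> b) is)"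

end

theory Submission
  imports Defs
begin

lemma Dop_pCons[simp]: "Dop (pCons a q) = q"
proof -
  have "pCons a q - [:poly (pCons a q) 0:] = [:0,1:] * q"
    by (simp add: poly_eq_iff coeff_pCons split: nat.splits)
  then show ?thesis unfolding Dop_def by (metis nonzero_mult_div_cancel_left pCons_eq_0_iff zero_neq_one)
qed

lemma coeff_Dop[simp]: "coeff (Dop f) i = coeff f (Suc i)"
  by (cases f) simp

lemma x_Dop: "[:0,1:] * Dop f = f - [:poly f 0:]"
proof -
  obtain a q where f: "f = pCons a q" by (cases f) auto
  show ?thesis unfolding f by (simp add: poly_eq_iff coeff_pCons split: nat.splits)
qed

lemma coeff_Dop_pow: "coeff ((Dop ^^ j) f) i = coeff f (i + j)"
  by (induction j arbitrary: i) auto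

lemma Dop_add: "Dop (f + g) = Dop f + Dop g"
  by (simp add: poly_eq_iff)
lemma Dop_smult: "Dop (smult c f) = smult c (Dop f)"
  by (simp add: poly_eq_iff)
lemma Dop_lin: "lin_op Dop"
  by (simp add: lin_op_def Dop_add Dop_smult)

lemma lin_op_0: "lin_op T \<Longrightarrow> T 0 = 0"
  unfolding lin_op_def by (metis smult_0_left)
lemma lin_op_add: "lin_op T \<Longrightarrow> T (f + g) = T f + T g"
  unfolding lin_op_def by blast
lemma lin_op_smult: "lin_op T \<Longrightarrow> T (smult c f) = smult c (T f)"
  unfolding lin_op_def by blast
lemma lin_op_minus: "lin_op T \<Longrightarrow> T (f - g) = T f - T g"
  using lin_op_add[of T g "f - g"] by simp
lemma lin_op_sum: "lin_op T \<Longrightarrow> T (\<Sum>i\<in>S. g i) = (\<Sum>i\<in>S. T (g i))"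
  by (induction S rule: infinite_finite_induct) (auto simp: lin_op_0 lin_op_add)
lemma lin_op_sum_smult: "lin_op T \<Longrightarrow> T (\<Sum>i\<in>S. smult (c i) (g i)) = (\<Sum>i\<in>S. smult (c i) (T (g i)))"
  by (simp add: lin_op_sum lin_op_smult)
lemma lin_op_comp: "lin_op S \<Longrightarrow> lin_op T \<Longrightarrow> lin_op (S \<circ> T)"
  unfolding lin_op_def by simp
lemma lin_op_id: "lin_op id"
  unfolding lin_op_def by simp
lemma lin_op_pow: "lin_op T \<Longrightarrow> lin_op (T ^^ k)"
  by (induction k) (auto simp: lin_op_id lin_op_comp)

lemma Dop_pow_zero: "degree f < j \<Longrightarrow> (Dop ^^ j) f = 0"
  by (simp add: poly_eq_iff coeff_Dop_pow coeff_eq_0)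

lemma degree_Dop_pow: "degree ((Dop ^^ j) f) \<le> degree f"
  by (rule degree_le) (simp add: coeff_Dop_pow coeff_eq_0)

definition pf :: "(nat \<Rightarrow> complex poly) \<Rightarrow> nat \<Rightarrow> complex fps" where
  "pf P l = Abs_fps (\<lambda>n. coeff (P n) l)"

locale psetup =
  fixes P :: "nat \<Rightarrow> complex poly"
    and A W :: "complex poly \<Rightarrow> complex poly"
  assumes monic: "\<forall>n. degree (P n) = n \<and> lead_coeff (P n) = 1"
    and zero_at_0: "\<forall>n\<ge>1. poly (P n) 0 = 0"
    and A_lin: "lin_op A" and A_P0: "A (P 0) = 0" and A_P: "\<forall>n. A (P (Suc n)) = P n"
    and W_lin: "lin_op W" and W_mon: "\<forall>n. W (monom 1 n) = P n"
begin

lemma deg_P[simp]: "degree (P n) = n" using monic by blast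
lemma lc_P[simp]: "coeff (P n) n = 1" using monic by (metis deg_P)

lemma P0[simp]: "P 0 = 1"
proof -
  have "degree (P 0) = 0" by simp
  then have "P 0 = [:coeff (P 0) 0:]" by (metis degree_0_id)
  then show ?thesis by (simp add: one_pCons)
qed

lemma coeff_P_0: "coeff (P n) 0 = (if n = 0 then 1 else 0)"
  using zero_at_0 by (cases n) (auto simp: poly_0_coeff_0)

lemma coeff_P_gt: "n < l \<Longrightarrow> coeff (P n) l = 0"
  by (simp add: coeff_eq_0)

lemma P1: "P 1 = [:0,1:]"
proof -
  have "coeff (P 1) 0 = 0" by (simp add: coeff_P_0)
  moreover have "coeff (P 1) 1 = 1" using lc_P[of 1] by simp
  ultimately show ?thesis
    by (simp add: poly_eq_iff coeff_pCons split: nat.splits)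
       (metis One_nat_def Suc_lessI coeff_P_gt deg_P nat.distinct(1) not_less_eq zero_less_Suc)
qed

lemma pf0: "pf P 0 = 1"
  by (simp add: pf_def fps_eq_iff coeff_P_0)

lemma pf_nth: "pf P l $ n = coeff (P n) l"
  by (simp add: pf_def)

lemma pf1_0: "pf P 1 $ 0 = 0" by (simp add: pf_nth)
lemma pf1_1: "pf P 1 $ 1 = 1" by (simp add: pf_nth P1)

lemma Apow_P: "(A ^^ k) (P n) = (if k \<le> n then P (n - k) else 0)"
proof (induction k)
  case 0 then show ?case by simp
next
  case (Suc k)
  show ?case
  proof (cases "Suc k \<le> n")
    case True
    then have "n - k = Suc (n - Suc k)" by simp
    then show ?thesis using Suc True A_P by simp
  next
    case False
    then show ?thesis using Suc A_P0 A_P lin_op_0[OF A_lin]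
      by (cases "k = n") auto
  qed
qed

lemma span_P: "degree f \<le> N \<Longrightarrow> \<exists>c. f = (\<Sum>k\<le>N. smult (c k) (P k))"
proof (induction N arbitrary: f)
  case 0
  then have "f = [:coeff f 0:]" by (metis degree_0_id le_zero_eq)
  then have "f = (\<Sum>k\<le>0. smult ((\<lambda>_. coeff f 0) k) (P k))" by simp
  then show ?case by (rule exI[where x="\<lambda>_. coeff f 0"])
next
  case (Suc N)
  define g where "g = f - smult (coeff f (Suc N)) (P (Suc N))"
  have "degree g \<le> N"
  proof (rule degree_le, intro allI impI)
    fix i assume "N < i"
    show "coeff g i = 0"
    proof (cases "i = Suc N")
      case True then show ?thesis by (simp add: g_def)
    next
      case False
      then have "Suc N < i" using \<open>N < i\<close> by simp
      then show ?thesis using Suc.prems by (simp add: g_def coeff_eq_0)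
    qed
  qed
  then obtain c where c: "g = (\<Sum>k\<le>N. smult (c k) (P k))" using Suc.IH by blast
  define c' where "c' = c(Suc N := coeff f (Suc N))"
  have "f = g + smult (coeff f (Suc N)) (P (Suc N))" by (simp add: g_def)
  also have "\<dots> = (\<Sum>k\<le>Suc N. smult (c' k) (P k))"
    by (simp add: c c'_def)
  finally show ?case by blast
qed

lemma coord_P: "k \<le> N \<Longrightarrow> poly ((A ^^ k) (\<Sum>j\<le>N. smult (c j) (P j))) 0 = c k"
proof -
  assume k: "k \<le> N"
  have "(A ^^ k) (\<Sum>j\<le>N. smult (c j) (P j)) = (\<Sum>j\<le>N. smult (c j) ((A ^^ k) (P j)))"
    by (rule lin_op_sum_smult[OF lin_op_pow[OF A_lin]])
  then have "poly ((A ^^ k) (\<Sum>j\<le>N. smult (c j) (P j))) 0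
      = (\<Sum>j\<le>N. c j * poly ((A ^^ k) (P j)) 0)"
    by (simp add: poly_sum)
  also have "\<dots> = (\<Sum>j\<le>N. if j = k then c j else 0)"
    by (rule sum.cong) (auto simp: Apow_P poly_0_coeff_0 coeff_P_0)
  also have "\<dots> = c k" using k by simp
  finally show ?thesis .
qed

lemma expand_P: "degree f \<le> N \<Longrightarrow> f = (\<Sum>k\<le>N. smult (poly ((A ^^ k) f) 0) (P k))"
proof -
  assume "degree f \<le> N"
  then obtain c where c: "f = (\<Sum>k\<le>N. smult (c k) (P k))" using span_P by blast
  have "(\<Sum>k\<le>N. smult (poly ((A ^^ k) f) 0) (P k)) = (\<Sum>k\<le>N. smult (c k) (P k))"
    by (rule sum.cong) (auto simp: c coord_P)
  then show ?thesis using c by simp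
qed

lemma lin_eqI: "lin_op S \<Longrightarrow> lin_op T \<Longrightarrow> (\<And>n. S (P n) = T (P n)) \<Longrightarrow> S = T"
proof
  fix f assume S: "lin_op S" and T: "lin_op T" and e: "\<And>n. S (P n) = T (P n)"
  obtain c where c: "f = (\<Sum>k\<le>degree f. smult (c k) (P k))" using span_P by blast
  have "S f = (\<Sum>k\<le>degree f. smult (c k) (S (P k)))" by (subst c, rule lin_op_sum_smult[OF S])
  also have "\<dots> = T (\<Sum>k\<le>degree f. smult (c k) (P k))" by (simp add: lin_op_sum_smult[OF T] e)
  finally show "S f = T f" using c by simp
qed

end

lemma sum_rev_atMost: "(\<Sum>k\<le>(n::nat). g k) = (\<Sum>k\<le>n. g (n - k))"
  using sum.atLeastAtMost_rev[of g 0 n] by (simp add: atMost_atLeast0)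

lemma varX_eq: "varX = [:[:0,1:]:]" by (simp add: varX_def embX_def)
lemma varY_eq: "varY = [:0,1:]"
  by (simp add: varY_def embY_def map_poly_pCons)

lemma coeff_embY[simp]: "coeff (embY f) j = [:coeff f j:]"
  by (simp add: embY_def coeff_map_poly)

lemma embX_mult: "embX a * q = smult a q" by (simp add: embX_def)

definition DQ :: "complex poly \<Rightarrow> complex poly poly" where
  "DQ f = (\<Sum>j\<le>degree f. monom ((Dop ^^ j) f) j)"

lemma coeff_DQ: "coeff (DQ f) j = (Dop ^^ j) f"
proof -
  have "coeff (DQ f) j = (\<Sum>i\<le>degree f. if i = j then (Dop ^^ i) f else 0)"
    by (simp add: DQ_def coeff_sum coeff_monom)
  also have "\<dots> = (Dop ^^ j) f"
    by (cases "j \<le> degree f") (auto simp: Dop_pow_zero)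
  finally show ?thesis .
qed

lemma Delta_DQ: "Delta f = DQ f"
proof -
  have "(varX - varY) * DQ f = varX * embX f - varY * embY f"
  proof (rule poly_eqI)
    fix j
    show "coeff ((varX - varY) * DQ f) j = coeff (varX * embX f - varY * embY f) j"
    proof (cases j)
      case 0
      then show ?thesis by (simp add: varX_eq varY_eq coeff_DQ embX_def)
    next
      case (Suc i)
      have "[:0,1:] * Dop ((Dop ^^ i) f) - (Dop ^^ i) f = - [:coeff f i:]"
        using x_Dop[of "(Dop ^^ i) f"] by (simp add: poly_0_coeff_0 coeff_Dop_pow)
      then show ?thesis using Suc by (simp add: varX_eq varY_eq coeff_DQ embX_def algebra_simps)
    qed
  qed
  moreover have "varX - varY \<noteq> 0" by (simp add: varX_eq varY_eq)
  ultimately show ?thesis unfolding Delta_def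
    by (metis nonzero_mult_div_cancel_left)
qed

lemma coeff_Delta: "coeff (Delta f) j = (Dop ^^ j) f"
  by (simp add: Delta_DQ coeff_DQ)

lemma degree_Delta: "degree (Delta f) \<le> degree f"
  by (rule degree_le) (simp add: coeff_Delta Dop_pow_zero)

lemma Delta_add: "Delta (f + g) = Delta f + Delta g"
  by (rule poly_eqI) (simp add: coeff_Delta lin_op_add[OF lin_op_pow[OF Dop_lin]])

lemma Delta_smult: "Delta (smult c f) = smult [:c:] (Delta f)"
  by (rule poly_eqI) (simp add: coeff_Delta lin_op_smult[OF lin_op_pow[OF Dop_lin]])

lemma smult_sum2: "smult a (\<Sum>i\<in>S. f i) = (\<Sum>i\<in>S. smult a (f i))"
  by (induction S rule: infinite_finite_induct) (auto simp: smult_add_right)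

lemma pconst_mult: "[:c:] * a = smult c a" by simp
lemma pconst_add: "[:a + b:] = [:a:] + [:b:]" by (simp add: add_pCons)

lemma pCons_sum: "[:(\<Sum>i\<in>S. g i):] = (\<Sum>i\<in>S. [:g i:])"
  by (induction S rule: infinite_finite_induct) (simp_all add: pconst_add del: add_pCons)

lemma tens_formula:
  assumes S: "lin_op S" and N: "degree q \<le> N"
  shows "tens S T q = (\<Sum>j\<le>N. [:S (coeff q j):] * embY (T (monom 1 j)))"
proof -
  have inner: "(\<Sum>i\<le>degree (coeff q j). smult [:coeff (coeff q j) i:] (embX (S (monom 1 i)) * E))
      = [:S (coeff q j):] * E" for j E
  proof -
    have "(\<Sum>i\<le>degree (coeff q j). smult [:coeff (coeff q j) i:] (embX (S (monom 1 i)) * E))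
       = (\<Sum>i\<le>degree (coeff q j). [:smult (coeff (coeff q j) i) (S (monom 1 i)):]) * E"
      by (simp add: sum_distrib_right embX_def)
    also have "\<dots> = [:(\<Sum>i\<le>degree (coeff q j). smult (coeff (coeff q j) i) (S (monom 1 i))):] * E"
      by (simp add: pCons_sum)
    also have "(\<Sum>i\<le>degree (coeff q j). smult (coeff (coeff q j) i) (S (monom 1 i)))
        = S (\<Sum>i\<le>degree (coeff q j). smult (coeff (coeff q j) i) (monom 1 i))"
      by (simp add: lin_op_sum_smult[OF S])
    also have "(\<Sum>i\<le>degree (coeff q j). smult (coeff (coeff q j) i) (monom 1 i)) = coeff q j"
      using poly_as_sum_of_monoms[of "coeff q j"] by (simp add: smult_monom)
    finally show ?thesis .
  qed
  have "tens S T q = (\<Sum>j\<le>degree q. [:S (coeff q j):] * embY (T (monom 1 j)))"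
    unfolding tens_def by (simp add: inner)
  also have "\<dots> = (\<Sum>j\<le>N. [:S (coeff q j):] * embY (T (monom 1 j)))"
  proof (rule sum.mono_neutral_left)
    show "\<forall>i\<in>{..N} - {..degree q}. [:S (coeff q i):] * embY (T (monom 1 i)) = 0"
      by (auto simp: coeff_eq_0 lin_op_0[OF S])
  qed (use N in auto)
  finally show ?thesis .
qed

lemma tens_id_coeff: "lin_op S \<Longrightarrow> coeff (tens S id q) j = S (coeff q j)"
proof -
  assume S: "lin_op S"
  have "tens S id q = (\<Sum>j\<le>degree q. monom (S (coeff q j)) j)"
    by (simp add: tens_formula[OF S order.refl] embY_def map_poly_monom smult_monom)
  then have "coeff (tens S id q) j = (\<Sum>i\<le>degree q. if i = j then S (coeff q i) else 0)"
    by (simp add: coeff_sum coeff_monom)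
  also have "\<dots> = S (coeff q j)"
    by (cases "j \<le> degree q") (auto simp: coeff_eq_0 lin_op_0[OF S])
  finally show ?thesis .
qed

lemma tens_add: "lin_op S \<Longrightarrow> tens S T (q1 + q2) = tens S T q1 + tens S T q2"
proof -
  assume S: "lin_op S"
  define N where "N = max (degree q1) (degree q2)"
  have "degree (q1 + q2) \<le> N" by (simp add: N_def degree_add_le)
  then show ?thesis
    by (simp add: tens_formula[OF S, of _ N] N_def lin_op_add[OF S] pconst_mult smult_add_left sum.distrib)
qed

lemma tens_smult: "lin_op S \<Longrightarrow> tens S T (smult [:c:] q) = smult [:c:] (tens S T q)"
proof -
  assume S: "lin_op S"
  have "degree (smult [:c:] q) \<le> degree q" by (simp add: degree_smult_le)
  then show ?thesis
    by (simp add: tens_formula[OF S, of _ "degree q"] lin_op_smult[OF S] smult_sum2 smult_smult pconst_mult)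
qed

lemma lin2_eqI:
  fixes F G :: "complex poly \<Rightarrow> complex poly poly"
  assumes "\<And>f g. F (f + g) = F f + F g" "\<And>c f. F (smult c f) = smult [:c:] (F f)"
    and "\<And>f g. G (f + g) = G f + G g" "\<And>c f. G (smult c f) = smult [:c:] (G f)"
    and "\<And>n. F (monom 1 n) = G (monom 1 n)"
  shows "F f = G f"
proof -
  have F0: "F 0 = 0" using assms(1)[of 0 0] by simp
  have G0: "G 0 = 0" using assms(3)[of 0 0] by simp
  have sF: "F (\<Sum>i\<in>S. smult (c i) (monom 1 i)) = (\<Sum>i\<in>S. smult [:c i:] (F (monom 1 i)))" for S c
    by (induction S rule: infinite_finite_induct) (auto simp: assms(1,2) F0)
  have sG: "G (\<Sum>i\<in>S. smult (c i) (monom 1 i)) = (\<Sum>i\<in>S. smult [:c i:] (G (monom 1 i)))" for S c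
    by (induction S rule: infinite_finite_induct) (auto simp: assms(3,4) G0)
  have f: "f = (\<Sum>i\<le>degree f. smult (coeff f i) (monom 1 i))"
    using poly_as_sum_of_monoms[of f] by (simp add: smult_monom)
  have "F f = (\<Sum>i\<le>degree f. smult [:coeff f i:] (F (monom 1 i)))" by (subst f, rule sF)
  also have "\<dots> = G (\<Sum>i\<le>degree f. smult (coeff f i) (monom 1 i))" by (simp add: sG assms(5))
  finally show ?thesis using f by simp
qed

context psetup begin

definition MULTF where "MULTF \<longleftrightarrow> (\<forall>i j. pf P (i + j) = pf P i * pf P j)"

lemma coeff_RHS_b:
  "coeff (coeff (\<Sum>k\<le>n. embX (P k) * embY (P (n - k))) j) i = (pf P i * pf P j) $ n"
  by (simp add: embX_mult coeff_sum fps_mult_nth pf_nth atMost_atLeast0 mult.commute)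

lemma coeff_coeff_Delta: "coeff (coeff (Delta f) j) i = coeff f (i + j)"
  by (simp add: coeff_Delta coeff_Dop_pow)

lemma cb_iff_MULTF:
  "(\<forall>n. Delta (P n) = (\<Sum>k\<le>n. embX (P k) * embY (P (n - k)))) \<longleftrightarrow> MULTF"
proof -
  have "(\<forall>n. Delta (P n) = (\<Sum>k\<le>n. embX (P k) * embY (P (n - k))))
     \<longleftrightarrow> (\<forall>n j i. coeff (P n) (i + j) = (pf P i * pf P j) $ n)"
    by (auto simp: poly_eq_iff coeff_RHS_b coeff_coeff_Delta)
  also have "\<dots> \<longleftrightarrow> MULTF"
    by (auto simp: MULTF_def fps_eq_iff pf_nth)
  finally show ?thesis .
qed

lemma Dpow_monom: "j \<le> n \<Longrightarrow> (Dop ^^ j) (monom 1 n) = monom 1 (n - j)"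
  by (rule poly_eqI) (auto simp: coeff_Dop_pow coeff_monom)

lemma tens_WW_monom:
  "tens W W (Delta (monom 1 n)) = (\<Sum>k\<le>n. embX (P k) * embY (P (n - k)))"
proof -
  have d: "degree (Delta (monom 1 n)) \<le> n"
    using degree_Delta[of "monom 1 n"] by (simp add: degree_monom_eq)
  have "tens W W (Delta (monom 1 n)) = (\<Sum>j\<le>n. [:W (coeff (Delta (monom 1 n)) j):] * embY (W (monom 1 j)))"
    by (rule tens_formula[OF W_lin d])
  also have "\<dots> = (\<Sum>j\<le>n. embX (P (n - j)) * embY (P j))"
    by (rule sum.cong) (auto simp: coeff_Delta Dpow_monom W_mon embX_def)
  also have "\<dots> = (\<Sum>k\<le>n. embX (P k) * embY (P (n - k)))"
    by (subst sum_rev_atMost) (rule sum.cong, auto)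
  finally show ?thesis .
qed

lemma ca_iff_cb:
  "(\<forall>f. Delta (W f) = tens W W (Delta f)) \<longleftrightarrow> (\<forall>n. Delta (P n) = (\<Sum>k\<le>n. embX (P k) * embY (P (n - k))))"
proof
  assume "\<forall>f. Delta (W f) = tens W W (Delta f)"
  then show "\<forall>n. Delta (P n) = (\<Sum>k\<le>n. embX (P k) * embY (P (n - k)))"
    using W_mon tens_WW_monom by metis
next
  assume b: "\<forall>n. Delta (P n) = (\<Sum>k\<le>n. embX (P k) * embY (P (n - k)))"
  show "\<forall>f. Delta (W f) = tens W W (Delta f)"
  proof
    fix f
    show "Delta (W f) = tens W W (Delta f)"
    proof (rule lin2_eqI[where F="\<lambda>f. Delta (W f)" and G="\<lambda>f. tens W W (Delta f)"])
      show "Delta (W (f + g)) = Delta (W f) + Delta (W g)" for f g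
        by (simp add: lin_op_add[OF W_lin] Delta_add)
      show "Delta (W (smult c f)) = smult [:c:] (Delta (W f))" for c f
        by (simp add: lin_op_smult[OF W_lin] Delta_smult)
      show "tens W W (Delta (f + g)) = tens W W (Delta f) + tens W W (Delta g)" for f g
        by (simp add: Delta_add tens_add[OF W_lin])
      show "tens W W (Delta (smult c f)) = smult [:c:] (tens W W (Delta f))" for c f
        by (simp add: Delta_smult tens_smult[OF W_lin])
      show "Delta (W (monom 1 n)) = tens W W (Delta (monom 1 n))" for n
        using b W_mon tens_WW_monom by simp
    qed
  qed
qed

lemma cc_iff_cb:
  "(Abs_fps (\<lambda>n. Delta (P n)) = Abs_fps (\<lambda>n. embX (P n)) * Abs_fps (\<lambda>n. embY (P n)))
   \<longleftrightarrow> (\<forall>n. Delta (P n) = (\<Sum>k\<le>n. embX (P k) * embY (P (n - k))))"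
  by (simp add: fps_eq_iff fps_mult_nth atMost_atLeast0)

end

lemma Dop_1[simp]: "Dop 1 = 0" by (metis Dop_pCons one_pCons)

lemma comm_pow:
  fixes A :: "complex poly \<Rightarrow> complex poly"
  assumes "\<And>g. A (Dop g) = Dop (A g)"
  shows "A ((Dop ^^ j) f) = (Dop ^^ j) (A f)"
  by (induction j) (auto simp: assms)

lemma comm_pow2:
  fixes A :: "complex poly \<Rightarrow> complex poly"
  assumes "\<And>g. A (Dop g) = Dop (A g)"
  shows "(A ^^ k) ((Dop ^^ j) f) = (Dop ^^ j) ((A ^^ k) f)"
  by (induction k) (auto simp: comm_pow[where A=A, OF assms])

lemma fps_op_ext:
  assumes "degree f \<le> N"
  shows "fps_op g Dop f = (\<Sum>m\<le>N. smult (g $ m) ((Dop ^^ m) f))"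
  unfolding fps_op_def
  by (rule sum.mono_neutral_left) (use assms in \<open>auto simp: Dop_pow_zero\<close>)

lemma fps_op_lin: "lin_op (fps_op g Dop)"
proof -
  have add: "fps_op g Dop (f + h) = fps_op g Dop f + fps_op g Dop h" for f h
  proof -
    define N where "N = max (degree f) (degree h)"
    have "degree (f + h) \<le> N" by (simp add: N_def degree_add_le)
    then show ?thesis
      by (simp add: fps_op_ext[of _ N] N_def lin_op_add[OF lin_op_pow[OF Dop_lin]] smult_add_right sum.distrib)
  qed
  have sm: "fps_op g Dop (smult c f) = smult c (fps_op g Dop f)" for c f
  proof -
    have "degree (smult c f) \<le> degree f" by (simp add: degree_smult_le)
    then show ?thesis
      by (simp add: fps_op_ext[of _ "degree f"] lin_op_smult[OF lin_op_pow[OF Dop_lin]] smult_sum2 mult.commute)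
  qed
  show ?thesis using add sm by (simp add: lin_op_def)
qed

lemma fps_op_comm: "fps_op g Dop (Dop f) = Dop (fps_op g Dop f)"
proof -
  have d: "degree (Dop f) \<le> degree f" using degree_Dop_pow[of 1 f] by simp
  show ?thesis
    by (simp add: fps_op_ext[OF d] fps_op_ext[of f "degree f"] lin_op_sum[OF Dop_lin] Dop_smult funpow_swap1)
qed

lemma E1: "Eop a (f - smult (of_real a) (Dop f)) = f"
proof -
  define c :: complex where "c = of_real a"
  define g where "g = f - smult c (Dop f)"
  have xD: "[:0,1:] * Dop f = f - [:poly f 0:]" by (rule x_Dop)
  have pc: "c * poly (Dop f) c = poly f c - poly f 0"
    using arg_cong[OF xD, of "\<lambda>p. poly p c"] by simp
  have pg: "poly g c = poly f 0" using pc by (simp add: g_def)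
  have "[:0,1:] * g - [:c * poly g c:] = [:0,1:] * f - smult c ([:0,1:] * Dop f) - [:c * poly f 0:]"
    unfolding pg by (simp add: g_def algebra_simps)
  also have "\<dots> = [:- c, 1:] * f"
    by (simp add: xD algebra_simps) (simp add: poly_eq_iff coeff_pCons poly_0_coeff_0 split: nat.splits)
  finally have e: "[:0,1:] * g - [:c * poly g c:] = [:- c, 1:] * f" .
  have "Eop a g = ([:- c, 1:] * f) div [:- c, 1:]"
    unfolding Eop_def c_def[symmetric] using e by simp
  also have "\<dots> = f" by (rule nonzero_mult_div_cancel_left) simp
  finally show ?thesis by (simp add: g_def c_def)
qed

lemma E2: "Eop a h - smult (of_real a) (Dop (Eop a h)) = h"
proof -
  define c :: complex where "c = of_real a"
  define e where "e = Eop a h"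
  define r where "r = [:0,1:] * h - [:c * poly h c:]"
  have "poly r c = 0" by (simp add: r_def)
  then have dv: "[:- c, 1:] dvd r" by (simp add: poly_eq_0_iff_dvd)
  have e_def': "e = r div [:- c, 1:]" by (simp add: e_def Eop_def r_def c_def)
  have re: "[:- c, 1:] * e = r" using dv unfolding e_def' by (rule dvd_mult_div_cancel)
  have xD: "[:0,1:] * Dop e = e - [:poly e 0:]" by (rule x_Dop)
  have "[:0,1:] * (e - smult c (Dop e)) = [:0,1:] * e - smult c ([:0,1:] * Dop e)"
    by (simp add: algebra_simps)
  also have "\<dots> = [:- c, 1:] * e + [:c * poly e 0:]"
    by (simp add: xD algebra_simps) (simp add: poly_eq_iff coeff_pCons poly_0_coeff_0 split: nat.splits)
  also have "\<dots> = [:0,1:] * h - [:c * poly h c:] + [:c * poly e 0:]" by (simp only: re r_def)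
  finally have eq: "[:0,1:] * (e - smult c (Dop e)) = [:0,1:] * h - [:c * poly h c:] + [:c * poly e 0:]" .
  from arg_cong[OF eq, of "\<lambda>p. poly p 0"] have "c * poly e 0 = c * poly h c" by simp
  with eq have "[:0,1:] * (e - smult c (Dop e)) = [:0,1:] * h" by simp
  then have "e - smult c (Dop e) = h" by (simp add: mult_left_cancel)
  then show ?thesis by (simp add: e_def c_def)
qed

context psetup begin


lemma cd_iff_ce:
  assumes u0: "u $ 0 = 0"
  shows "(Abs_fps P * (1 - Abs_fps (\<lambda>n. [:0, u $ n:])) = 1)
     \<longleftrightarrow> (Abs_fps (\<lambda>n. Dop (P n)) = Abs_fps (\<lambda>n. [:u $ n:]) * Abs_fps P)"
proof -
  define S where "S n = (\<Sum>i\<le>n. [:u $ i:] * P (n - i))" for n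
  have d: "(Abs_fps P * (1 - Abs_fps (\<lambda>n. [:0, u $ n:]))) $ n = P n - [:0,1:] * S n" for n
  proof -
    have "(Abs_fps P * (1 - Abs_fps (\<lambda>n. [:0, u $ n:]))) $ n
        = P n - (\<Sum>i=0..n. P i * [:0, u $ (n - i):])"
      by (simp add: algebra_simps fps_mult_nth)
    also have "(\<Sum>i=0..n. P i * [:0, u $ (n - i):]) = (\<Sum>i\<le>n. [:0,1:] * ([:u $ (n - i):] * P i))"
      by (rule sum.cong) (auto simp: atMost_atLeast0 algebra_simps)
    also have "\<dots> = [:0,1:] * S n"
      unfolding S_def by (subst sum_rev_atMost) (simp add: sum_distrib_left)
    finally show ?thesis .
  qed
  have e: "(Abs_fps (\<lambda>n. [:u $ n:]) * Abs_fps P) $ n = S n" for n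
    by (simp add: fps_mult_nth S_def atMost_atLeast0)
  have S0: "S 0 = 0" by (simp add: S_def u0)
  have pt: "(P n - [:0,1:] * S n = (if n = 0 then 1 else 0)) \<longleftrightarrow> Dop (P n) = S n" for n
  proof (cases n)
    case 0 then show ?thesis by (simp add: S0)
  next
    case (Suc m)
    have "P n = [:0,1:] * Dop (P n)" using x_Dop[of "P n"] zero_at_0 Suc by simp
    then have "(P n - [:0,1:] * S n = 0) \<longleftrightarrow> [:0,1:] * Dop (P n) = [:0,1:] * S n" by (metis eq_iff_diff_eq_0)
    also have "\<dots> \<longleftrightarrow> Dop (P n) = S n" by (simp add: mult_left_cancel)
    finally show ?thesis using Suc by simp
  qed
  show ?thesis
    by (simp add: fps_eq_iff d e pt[symmetric])
qed

lemma ce_iff_pow: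
  "(Abs_fps (\<lambda>n. Dop (P n)) = Abs_fps (\<lambda>n. [:u $ n:]) * Abs_fps P)
     \<longleftrightarrow> (\<forall>l. pf P (Suc l) = u * pf P l)"
proof -
  have "coeff ((Abs_fps (\<lambda>n. [:u $ n:]) * Abs_fps P) $ n) l = (u * pf P l) $ n" for n l
    by (simp add: fps_mult_nth coeff_sum pf_nth)
  then show ?thesis
    by (auto simp: fps_eq_iff poly_eq_iff pf_nth)
qed

lemma pow_MULTF: "(\<forall>l. pf P (Suc l) = u * pf P l) \<Longrightarrow> MULTF \<and> u = pf P 1"
proof -
  assume h: "\<forall>l. pf P (Suc l) = u * pf P l"
  have p: "pf P l = u ^ l" for l by (induction l) (auto simp: pf0 h)
  then show ?thesis by (auto simp: MULTF_def power_add)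
qed

lemma MULTF_pow: "MULTF \<Longrightarrow> pf P (Suc l) = pf P 1 * pf P l"
  unfolding MULTF_def by (metis plus_1_eq_Suc)

lemma ce_iff_MULTF:
  "(\<exists>u::complex fps. u $ 0 = 0 \<and> u $ 1 = 1 \<and>
      Abs_fps (\<lambda>n. Dop (P n)) = Abs_fps (\<lambda>n. [:u $ n:]) * Abs_fps P) \<longleftrightarrow> MULTF"
proof
  assume "\<exists>u::complex fps. u $ 0 = 0 \<and> u $ 1 = 1 \<and>
      Abs_fps (\<lambda>n. Dop (P n)) = Abs_fps (\<lambda>n. [:u $ n:]) * Abs_fps P"
  then obtain u :: "complex fps" where "Abs_fps (\<lambda>n. Dop (P n)) = Abs_fps (\<lambda>n. [:u $ n:]) * Abs_fps P"
    by blast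
  then have "\<forall>l. pf P (Suc l) = u * pf P l" using ce_iff_pow by blast
  then show MULTF using pow_MULTF by blast
next
  assume M: MULTF
  have "\<forall>l. pf P (Suc l) = pf P 1 * pf P l" using MULTF_pow[OF M] by blast
  then have "Abs_fps (\<lambda>n. Dop (P n)) = Abs_fps (\<lambda>n. [:pf P 1 $ n:]) * Abs_fps P"
    using ce_iff_pow by blast
  then show "\<exists>u::complex fps. u $ 0 = 0 \<and> u $ 1 = 1 \<and>
      Abs_fps (\<lambda>n. Dop (P n)) = Abs_fps (\<lambda>n. [:u $ n:]) * Abs_fps P"
    using pf1_0 pf1_1 by blast
qed

lemma cd_iff_MULTF:
  "(\<exists>u::complex fps. u $ 0 = 0 \<and> u $ 1 = 1 \<and>
      Abs_fps P * (1 - Abs_fps (\<lambda>n. [:0, u $ n:])) = 1) \<longleftrightarrow> MULTF"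
proof -
  have "(\<exists>u::complex fps. u $ 0 = 0 \<and> u $ 1 = 1 \<and>
      Abs_fps P * (1 - Abs_fps (\<lambda>n. [:0, u $ n:])) = 1) \<longleftrightarrow>
      (\<exists>u::complex fps. u $ 0 = 0 \<and> u $ 1 = 1 \<and>
      Abs_fps (\<lambda>n. Dop (P n)) = Abs_fps (\<lambda>n. [:u $ n:]) * Abs_fps P)"
    using cd_iff_ce by blast
  then show ?thesis using ce_iff_MULTF by simp
qed

end

context psetup begin

lemma A1[simp]: "A 1 = 0" using A_P0 by simp
lemma MULTF_cg: "MULTF \<Longrightarrow> A \<circ> Dop = Dop \<circ> A"
proof -
  assume M: MULTF
  define u where "u = pf P 1"
  have "Abs_fps (\<lambda>n. Dop (P n)) = Abs_fps (\<lambda>n. [:u $ n:]) * Abs_fps P"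
    using ce_iff_pow MULTF_pow[OF M] u_def by blast
  then have DP: "Dop (P n) = (\<Sum>i\<le>n. smult (u $ i) (P (n - i)))" for n
    by (simp add: fps_eq_iff fps_mult_nth atMost_atLeast0)
  have u0: "u $ 0 = 0" unfolding u_def by (rule pf1_0)
  show ?thesis
  proof (rule lin_eqI)
    show "lin_op (A \<circ> Dop)" by (rule lin_op_comp[OF A_lin Dop_lin])
    show "lin_op (Dop \<circ> A)" by (rule lin_op_comp[OF Dop_lin A_lin])
    fix n
    show "(A \<circ> Dop) (P n) = (Dop \<circ> A) (P n)"
    proof (cases n)
      case 0
      then show ?thesis by (simp add: DP u0 A_P0 lin_op_0[OF A_lin] lin_op_0[OF Dop_lin])
    next
      case (Suc m)
      have "(A \<circ> Dop) (P n) = (\<Sum>i\<le>Suc m. smult (u $ i) (A (P (Suc m - i))))"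
        by (simp only: DP Suc comp_apply lin_op_sum_smult[OF A_lin])
      also have "\<dots> = (\<Sum>i\<le>m. smult (u $ i) (A (P (Suc m - i))))"
        by (simp add: A_P0)
      also have "\<dots> = (\<Sum>i\<le>m. smult (u $ i) (P (m - i)))"
        by (rule sum.cong) (auto simp: Suc_diff_le A_P)
      also have "\<dots> = (Dop \<circ> A) (P n)" by (simp add: Suc A_P DP)
      finally show ?thesis .
    qed
  qed
qed

lemma cg_MULTF: "A \<circ> Dop = Dop \<circ> A \<Longrightarrow> MULTF"
proof -
  assume c: "A \<circ> Dop = Dop \<circ> A"
  then have c': "\<And>g. A (Dop g) = Dop (A g)" by (metis comp_apply)
  have key: "(Dop ^^ j) (P n) = (\<Sum>k\<le>n. smult (coeff (P (n - k)) j) (P k))" for n j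
  proof -
    have d: "degree ((Dop ^^ j) (P n)) \<le> n" using degree_Dop_pow[of j "P n"] by simp
    have "(Dop ^^ j) (P n) = (\<Sum>k\<le>n. smult (poly ((A ^^ k) ((Dop ^^ j) (P n))) 0) (P k))"
      by (rule expand_P[OF d])
    also have "\<dots> = (\<Sum>k\<le>n. smult (coeff (P (n - k)) j) (P k))"
      by (rule sum.cong) (auto simp: comm_pow2[where A=A, OF c'] Apow_P poly_0_coeff_0 coeff_Dop_pow)
    finally show ?thesis .
  qed
  have "coeff (P n) (i + j) = (pf P i * pf P j) $ n" for n i j
  proof -
    have "coeff (P n) (i + j) = coeff ((Dop ^^ j) (P n)) i" by (simp add: coeff_Dop_pow)
    also have "\<dots> = (\<Sum>k\<le>n. coeff (P (n - k)) j * coeff (P k) i)" by (simp add: key coeff_sum)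
    also have "\<dots> = (pf P i * pf P j) $ n" by (simp add: fps_mult_nth pf_nth atMost_atLeast0 mult.commute)
    finally show ?thesis .
  qed
  then show MULTF by (auto simp: MULTF_def fps_eq_iff pf_nth)
qed

lemma cf_cg: "(\<exists>u::complex fps. u $ 0 = 0 \<and> u $ 1 = 1 \<and> A = fps_op (fps_inv u) Dop) \<Longrightarrow> A \<circ> Dop = Dop \<circ> A"
  by (auto simp: fun_eq_iff fps_op_comm)


end

context psetup begin
lemma MULTF_cf: "MULTF \<Longrightarrow> (\<exists>u::complex fps. u $ 0 = 0 \<and> u $ 1 = 1 \<and> A = fps_op (fps_inv u) Dop)"
proof -
  assume M: MULTF
  define u where "u = pf P 1"
  define v where "v = fps_inv u"
  have u0: "u $ 0 = 0" and u1: "u $ 1 = 1" unfolding u_def by (rule pf1_0, rule pf1_1)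
  have pw: "pf P l = u ^ l" for l
  proof (induction l)
    case 0 then show ?case by (simp add: pf0)
  next
    case (Suc l)
    have "pf P (Suc l) = u * pf P l" using MULTF_pow[OF M, of l] unfolding u_def .
    then show ?case using Suc by simp
  qed
  have u1': "u $ 1 \<noteq> 0" using u1 by simp
  have vu: "v oo u = fps_X" unfolding v_def by (rule fps_inv[OF u0 u1'])
  have v0: "v $ 0 = 0" by (simp add: v_def fps_inv_def)
  have "A = fps_op v Dop"
  proof (rule lin_eqI[OF A_lin fps_op_lin])
    fix n
    show "A (P n) = fps_op v Dop (P n)"
    proof (rule poly_eqI)
      fix l
      have cP: "coeff (P n) (l + m) = (u ^ m * u ^ l) $ n" for m
      proof -
        have "coeff (P n) (l + m) = pf P (l + m) $ n" by (simp only: pf_nth)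
        also have "\<dots> = (u ^ m * u ^ l) $ n" by (simp only: pw power_add[symmetric] add.commute)
        finally show ?thesis .
      qed
      have "coeff (fps_op v Dop (P n)) l = (\<Sum>m\<le>n. v $ m * coeff (P n) (l + m))"
        unfolding fps_op_def deg_P coeff_sum coeff_smult coeff_Dop_pow ..
      also have "\<dots> = (\<Sum>m\<le>n. v $ m * (u ^ m * u ^ l) $ n)"
        by (simp only: cP)
      finally have "coeff (fps_op v Dop (P n)) l = (\<Sum>m\<le>n. v $ m * (u ^ m * u ^ l) $ n)" .
      also have "\<dots> = (\<Sum>m\<le>n. \<Sum>k\<le>n. v $ m * (u ^ m) $ k * (u ^ l) $ (n - k))"
        by (simp add: fps_mult_nth atMost_atLeast0 sum_distrib_left mult.assoc)
      also have "\<dots> = (\<Sum>k\<le>n. (\<Sum>m\<le>n. v $ m * (u ^ m) $ k) * (u ^ l) $ (n - k))"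
        by (subst sum.swap) (simp add: sum_distrib_right)
      also have "\<dots> = (\<Sum>k\<le>n. (v oo u) $ k * (u ^ l) $ (n - k))"
      proof (rule sum.cong[OF refl])
        fix k assume k: "k \<in> {..n}"
        have "(\<Sum>m\<le>n. v $ m * (u ^ m) $ k) = (\<Sum>m\<le>k. v $ m * (u ^ m) $ k)"
          by (rule sum.mono_neutral_right) (use k startsby_zero_power_prefix[OF u0] in auto)
        then show "(\<Sum>m\<le>n. v $ m * (u ^ m) $ k) * (u ^ l) $ (n - k) = (v oo u) $ k * (u ^ l) $ (n - k)"
          by (simp add: fps_compose_nth atMost_atLeast0)
      qed
      also have "\<dots> = (fps_X * u ^ l) $ n" by (simp add: vu fps_mult_nth atMost_atLeast0)
      also have "\<dots> = coeff (A (P n)) l"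
        by (cases n) (auto simp: A_P0 lin_op_0[OF A_lin] A_P pw[symmetric] pf_nth)
      finally show "coeff (A (P n)) l = coeff (fps_op v Dop (P n)) l" by simp
    qed
  qed
  then show ?thesis using u0 u1 v_def by blast
qed

lemma ch_iff_cg: "(\<forall>a::real. A \<circ> Eop a = Eop a \<circ> A) \<longleftrightarrow> A \<circ> Dop = Dop \<circ> A"
proof
  assume h: "\<forall>a::real. A \<circ> Eop a = Eop a \<circ> A"
  show "A \<circ> Dop = Dop \<circ> A"
  proof
    fix f
    define g where "g = f - Dop f"
    have "A f = A (Eop 1 g)" using E1[of 1 f] by (simp add: g_def)
    also have "\<dots> = Eop 1 (A g)" using h by (metis comp_apply)
    finally have Af: "A f = Eop 1 (A g)" .
    have "A f - Dop (A f) = A g" using E2[of 1 "A g"] Af by simp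
    also have "\<dots> = A f - A (Dop f)" by (simp add: g_def lin_op_minus[OF A_lin])
    finally show "(A \<circ> Dop) f = (Dop \<circ> A) f" by simp
  qed
next
  assume c: "A \<circ> Dop = Dop \<circ> A"
  then have c': "\<And>g. A (Dop g) = Dop (A g)" by (metis comp_apply)
  show "\<forall>a::real. A \<circ> Eop a = Eop a \<circ> A"
  proof (intro allI ext)
    fix a :: real and h
    define e where "e = Eop a h"
    have "h = e - smult (of_real a) (Dop e)" using E2[of a h] by (simp add: e_def)
    then have "A h = A e - smult (of_real a) (Dop (A e))"
      by (simp add: lin_op_minus[OF A_lin] lin_op_smult[OF A_lin] c')
    then have "Eop a (A h) = A e" using E1[of a "A e"] by simp
    then show "(A \<circ> Eop a) h = (Eop a \<circ> A) h" by (simp add: e_def)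
  qed
qed

lemma ci_iff_cg: "(\<forall>f. tens A id (Delta f) = Delta (A f)) \<longleftrightarrow> A \<circ> Dop = Dop \<circ> A"
proof -
  have "(\<forall>f. tens A id (Delta f) = Delta (A f)) \<longleftrightarrow> (\<forall>f j. A ((Dop ^^ j) f) = (Dop ^^ j) (A f))"
    by (simp add: poly_eq_iff tens_id_coeff[OF A_lin] coeff_Delta)
  also have "\<dots> \<longleftrightarrow> A \<circ> Dop = Dop \<circ> A"
  proof
    assume H: "\<forall>f j. A ((Dop ^^ j) f) = (Dop ^^ j) (A f)"
    show "A \<circ> Dop = Dop \<circ> A"
    proof
      fix f show "(A \<circ> Dop) f = (Dop \<circ> A) f" using spec[OF spec[OF H, of f], of 1] by simp
    qed
  next
    assume "A \<circ> Dop = Dop \<circ> A"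
    then have c': "\<And>g. A (Dop g) = Dop (A g)" by (metis comp_apply)
    show "\<forall>f j. A ((Dop ^^ j) f) = (Dop ^^ j) (A f)" using comm_pow[where A=A, OF c'] by blast
  qed
  finally show ?thesis .
qed


end

definition rhom :: "('a::comm_ring_1 \<Rightarrow> 'b::comm_ring_1) \<Rightarrow> bool" where
  "rhom g \<longleftrightarrow> g 0 = 0 \<and> g 1 = 1 \<and> (\<forall>a b. g (a + b) = g a + g b) \<and> (\<forall>a b. g (a * b) = g a * g b)"

lemma rhomD:
  assumes "rhom g"
  shows "g 0 = 0" "g 1 = 1" "g (a + b) = g a + g b" "g (a * b) = g a * g b"
  using assms by (auto simp: rhom_def)

lemma rhom_diff: "rhom g \<Longrightarrow> g (a - b) = g a - g b"
  using rhomD(3)[of g "a - b" b] by simp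

lemma rhom_sum: "rhom g \<Longrightarrow> g (\<Sum>i\<in>S. f i) = (\<Sum>i\<in>S. g (f i))"
  by (induction S rule: infinite_finite_induct) (auto simp: rhomD)

lemma rhom_comp: "rhom g \<Longrightarrow> rhom h \<Longrightarrow> rhom (g \<circ> h)"
  by (simp add: rhom_def)

lemma rhom_poly: "rhom (\<lambda>p. poly p s)"
  by (simp add: rhom_def)

lemma rhom_const: "rhom (\<lambda>c. [:c:])"
  by (simp add: rhom_def add_pCons one_pCons)

lemma map_poly_add_hom: "rhom g \<Longrightarrow> map_poly g (p + q) = map_poly g p + map_poly g q"
  by (rule poly_eqI) (simp add: coeff_map_poly rhomD)

lemma map_poly_mult_hom: "rhom g \<Longrightarrow> map_poly g (p * q) = map_poly g p * map_poly g q"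
proof (induction p)
  case 0 then show ?case by simp
next
  case (pCons a p)
  have g0: "g 0 = 0" using pCons(3) by (simp add: rhomD)
  have "map_poly g (pCons a p * q) = map_poly g (smult a q + pCons 0 (p * q))" by simp
  also have "\<dots> = smult (g a) (map_poly g q) + pCons 0 (map_poly g p * map_poly g q)"
    using pCons by (simp add: map_poly_add_hom map_poly_smult map_poly_pCons g0 rhomD)
  also have "\<dots> = map_poly g (pCons a p) * map_poly g q"
    by (simp add: map_poly_pCons g0)
  finally show ?case .
qed

lemma rhom_map_poly: "rhom g \<Longrightarrow> rhom (map_poly g)"
  by (simp add: rhom_def map_poly_add_hom map_poly_mult_hom map_poly_1')

lemma rhom_embX: "rhom embX"
  using rhom_const by (simp add: embX_def[abs_def])

lemma rhom_embY: "rhom embY"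
  using rhom_map_poly[OF rhom_const] by (simp add: embY_def[abs_def])

lemma eval_sum2_alt: "eval_sum2 = (\<lambda>p. poly p (varX + varY)) \<circ> map_poly ((\<lambda>c. [:c:]) \<circ> (\<lambda>c. [:c:]))"
  by (simp add: eval_sum2_def[abs_def] o_def)

lemma rhom_eval_sum2: "rhom eval_sum2"
  unfolding eval_sum2_alt
  by (intro rhom_comp rhom_poly rhom_map_poly rhom_const)

definition fmap :: "('a \<Rightarrow> 'b) \<Rightarrow> 'a fps \<Rightarrow> 'b fps" where
  "fmap g F = Abs_fps (\<lambda>n. g (F $ n))"

lemma fmap_nth[simp]: "fmap g F $ n = g (F $ n)" by (simp add: fmap_def)

lemma fmap_mult: "rhom g \<Longrightarrow> fmap g (F * G) = fmap g F * fmap g G"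
  by (rule fps_ext) (simp add: fps_mult_nth rhom_sum rhomD)

lemma fmap_add: "rhom g \<Longrightarrow> fmap g (F + G) = fmap g F + fmap g G"
  by (rule fps_ext) (simp add: rhomD)

lemma fmap_diff: "rhom g \<Longrightarrow> fmap g (F - G) = fmap g F - fmap g G"
  by (rule fps_ext) (simp add: rhom_diff)

lemma fmap_1: "rhom g \<Longrightarrow> fmap g 1 = 1"
  by (rule fps_ext) (simp add: rhomD)

lemma fmap_X_power: "rhom g \<Longrightarrow> fmap g (fps_X ^ n) = fps_X ^ n"
  by (rule fps_ext) (simp add: rhomD)

lemma psi_eval_sum2: "poly (eval_sum2 m) [:0,1:] = pcompose m [:0,2:]"
proof (induction m)
  case 0 then show ?case by (simp add: eval_sum2_def)
next
  case (pCons a m)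
  have "eval_sum2 (pCons a m) = [:[:a:]:] + (varX + varY) * eval_sum2 m"
    by (simp add: eval_sum2_def map_poly_pCons)
  moreover have "poly (varX + varY) [:0,1:] = [:0,2:]"
    by (simp add: varX_eq varY_eq)
  ultimately have "poly (eval_sum2 (pCons a m)) [:0,1:] = [:a:] + [:0,2:] * poly (eval_sum2 m) [:0,1:]"
    by simp
  then show ?case using pCons by (simp add: pcompose_pCons)
qed

lemma psi_embY: "poly (embY m) [:0,1:] = m"
proof -
  have "poly (embY m) [:0,1:] = pcompose m [:0,1:]"
    by (induction m) (simp_all add: embY_def map_poly_pCons pcompose_pCons)
  also have "\<dots> = m" by (rule poly_eqI) (simp add: coeff_pcompose_linear)
  finally show ?thesis .
qed

lemma additive_poly:
  assumes "eval_sum2 m = embX m + embY m" and "j \<noteq> 1"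
  shows "coeff m j = 0"
proof -
  have "pcompose m [:0,2:] = m + m"
    using arg_cong[OF assms(1), of "\<lambda>q. poly q [:0,1:]"]
    by (simp add: psi_eval_sum2 psi_embY embX_def)
  then have "coeff (pcompose m [:0,2:]) j = coeff m j + coeff m j" by (metis coeff_add)
  then have "(2::complex) ^ j * coeff m j = 2 * coeff m j"
    by (simp add: coeff_pcompose_linear)
  moreover have "(2::complex) ^ j \<noteq> 2"
  proof
    assume h: "(2::complex) ^ j = 2"
    have "(2::complex) ^ j = of_nat (2 ^ j)" by simp
    then have "(2::nat) ^ j = 2" using h by (metis of_nat_eq_iff of_nat_numeral)
    then show False
    proof (cases j)
      case 0 then show False using \<open>(2::nat) ^ j = 2\<close> by simp
    next
      case (Suc k)
      then have "k \<ge> 1" using assms(2) by simp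
      then have "(2::nat) ^ k \<ge> 2 ^ 1" by (rule power_increasing) simp
      then show False using \<open>(2::nat) ^ j = 2\<close> Suc by simp
    qed
  qed
  ultimately show ?thesis by (metis mult_cancel_right)
qed

lemma alg1:
  fixes a b c la lb lc :: "'a::comm_ring_1"
  assumes "a * la = 1" "b * lb = 1" "c * lc = 1" "lc = la + lb - 1"
  shows "c * (a + b - a * b) = a * b"
proof -
  have "a * b = a * b * (c * lc)" using assms(3) by simp
  also have "\<dots> = c * (b * (a * la) + a * (b * lb) - a * b)" by (simp add: assms(4) algebra_simps)
  also have "\<dots> = c * (a + b - a * b)" using assms(1,2) by (simp add: algebra_simps)
  finally show ?thesis ..
qed

lemma alg2:
  fixes a b c la lb lc :: "'a::comm_ring_1"
  assumes "c * (a + b - a * b) = a * b"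
  shows "(c * lc) * ((a * la) * lb + (b * lb) * la - (a * la) * (b * lb)) = (a * la) * (b * lb) * lc"
proof -
  have "(c * lc) * ((a * la) * lb + (b * lb) * la - (a * la) * (b * lb)) = lc * la * lb * (c * (a + b - a * b))"
    by (simp add: algebra_simps)
  also have "\<dots> = lc * la * lb * (a * b)" by (simp only: assms)
  also have "\<dots> = (a * la) * (b * lb) * lc" by (simp add: algebra_simps)
  finally show ?thesis .
qed

lemma alg3:
  fixes t a b c X Y :: "'a::comm_ring_1"
  shows "(1 + t * c) * ((1 + t * a) * Y + (1 + t * b) * X - (1 + t * a) * (1 + t * b))
       - (1 + t * a) * (1 + t * b) * (X + Y - 1)
     = t * (c * (X + Y - 1) - a * X - b * Y
            + t * (- a * b + c * (a * Y + b * X - a - b) - a * b * (X + Y - 1) - t * a * b * c))"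
  by (simp add: algebra_simps)

lemma lin_eval_sum2: "degree q \<le> 1 \<Longrightarrow> eval_sum2 q = embX q + embY q - [:[:coeff q 0:]:]"
proof -
  assume "degree q \<le> 1"
  then have q: "q = [:coeff q 0, coeff q 1:]"
    by (simp add: poly_eq_iff coeff_pCons coeff_eq_0 split: nat.splits)
  show ?thesis
    by (subst (1 2 3) q) (simp add: eval_sum2_def embX_def embY_def map_poly_pCons varX_eq varY_eq
        poly_eq_iff coeff_pCons split: nat.splits)
qed

context psetup begin

lemma Hmap: "Abs_fps (\<lambda>n. g (P n)) = fmap g (Abs_fps P)"
  by (rule fps_ext) simp

lemma HL_nth:
  "(Abs_fps P * (1 - Abs_fps (\<lambda>n. [:0, u $ n:]))) $ n = P n - [:0,1:] * (\<Sum>i\<le>n. [:u $ i:] * P (n - i))"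
proof -
  have "(Abs_fps P * (1 - Abs_fps (\<lambda>n. [:0, u $ n:]))) $ n
      = P n - (\<Sum>i=0..n. P i * [:0, u $ (n - i):])"
    by (simp add: algebra_simps fps_mult_nth)
  also have "(\<Sum>i=0..n. P i * [:0, u $ (n - i):]) = (\<Sum>i\<le>n. [:0,1:] * ([:u $ (n - i):] * P i))"
    by (rule sum.cong) (auto simp: atMost_atLeast0 algebra_simps)
  also have "\<dots> = [:0,1:] * (\<Sum>i\<le>n. [:u $ i:] * P (n - i))"
    by (subst sum_rev_atMost) (simp add: sum_distrib_left)
  finally show ?thesis .
qed

lemma Lxy:
  assumes u0: "u $ 0 = 0"
  defines "L \<equiv> 1 - Abs_fps (\<lambda>n. [:0, u $ n:])"
  shows "fmap eval_sum2 L = fmap embX L + fmap embY L - 1"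
proof (rule fps_ext)
  fix n
  have Ln: "L $ n = [:(if n = 0 then 1 else 0), - (u $ n):]"
    using u0 by (cases n) (simp_all add: L_def one_pCons)
  have dl: "degree (L $ n) \<le> 1" unfolding Ln
    by (rule order.trans[OF degree_pCons_le]) simp
  have c0: "coeff (L $ n) 0 = (if n = 0 then 1 else 0)"
    using u0 by (cases n) (simp_all add: L_def)
  have one: "(1 :: complex poly poly fps) $ n = [:[:coeff (L $ n) 0:]:]"
    by (simp add: c0 one_pCons)
  show "fmap eval_sum2 L $ n = (fmap embX L + fmap embY L - 1) $ n"
    by (simp only: fmap_nth lin_eval_sum2[OF dl] fps_add_nth fps_sub_nth one)
qed

lemma MULTF_cl:
  assumes M: MULTF
  shows "let Hx = Abs_fps (\<lambda>n. embX (P n)); Hy = Abs_fps (\<lambda>n. embY (P n));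
                Hxy = Abs_fps (\<lambda>n. eval_sum2 (P n))
            in Hxy * (Hx + Hy - Hx * Hy) = Hx * Hy"
proof -
  obtain u :: "complex fps" where u0: "u $ 0 = 0" and
    HL: "Abs_fps P * (1 - Abs_fps (\<lambda>n. [:0, u $ n:])) = 1"
    using M cd_iff_MULTF by blast
  define L where "L = 1 - Abs_fps (\<lambda>n. [:0, u $ n:])"
  have HLg: "fmap g (Abs_fps P) * fmap g L = 1" if "rhom g" for g
    using HL that by (simp add: L_def fmap_mult[symmetric] fmap_1)
  have "fmap eval_sum2 (Abs_fps P) * (fmap embX (Abs_fps P) + fmap embY (Abs_fps P)
          - fmap embX (Abs_fps P) * fmap embY (Abs_fps P)) = fmap embX (Abs_fps P) * fmap embY (Abs_fps P)"
    by (rule alg1[OF HLg[OF rhom_embX] HLg[OF rhom_embY] HLg[OF rhom_eval_sum2]])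
       (use Lxy[OF u0] in \<open>simp add: L_def\<close>)
  then show ?thesis by (simp add: Hmap Let_def)
qed

lemma cl_MULTF:
  assumes l: "let Hx = Abs_fps (\<lambda>n. embX (P n)); Hy = Abs_fps (\<lambda>n. embY (P n));
                Hxy = Abs_fps (\<lambda>n. eval_sum2 (P n))
            in Hxy * (Hx + Hy - Hx * Hy) = Hx * Hy"
  shows MULTF
proof -
  define u where "u = pf P 1"
  have u0: "u $ 0 = 0" and u1: "u $ 1 = 1" unfolding u_def by (rule pf1_0, rule pf1_1)
  define L where "L = 1 - Abs_fps (\<lambda>n. [:0, u $ n:])"
  define M where "M = Abs_fps P * L"
  have "M = 1"
  proof (rule ccontr)
    assume "M \<noteq> 1"
    define N where "N = M - 1"
    have N0: "N \<noteq> 0" using \<open>M \<noteq> 1\<close> by (simp add: N_def)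
    have "N $ 0 = 0" by (simp add: N_def M_def L_def u0)
    define n where "n = subdegree N"
    have "subdegree N \<noteq> 0" using N0 \<open>N $ 0 = 0\<close> by (simp add: subdegree_eq_0_iff)
    then have n1: "n \<ge> 1" by (simp add: n_def)
    define N' where "N' = fps_shift n N"
    have Nn: "N' $ 0 = M $ n" using n1 by (simp add: N'_def N_def)
    have Nn0: "M $ n \<noteq> 0" using nth_subdegree_nonzero[OF N0] n1 by (simp add: n_def N_def)
    have MN: "M = 1 + fps_X ^ n * N'"
      using subdegree_decompose[of N] by (simp add: N'_def n_def N_def mult.commute)
    have Mg: "fmap g (Abs_fps P) * fmap g L = 1 + fps_X ^ n * fmap g N'" if g: "rhom g" for g
    proof -
      have "fmap g M = 1 + fps_X ^ n * fmap g N'"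
        by (simp add: MN fmap_add[OF g] fmap_mult[OF g] fmap_1[OF g] fmap_X_power[OF g])
      then show ?thesis by (simp add: M_def fmap_mult[OF g])
    qed
    define Hx where "Hx = fmap embX (Abs_fps P)"
    define Hy where "Hy = fmap embY (Abs_fps P)"
    define Hxy where "Hxy = fmap eval_sum2 (Abs_fps P)"
    define Lx where "Lx = fmap embX L"
    define Ly where "Ly = fmap embY L"
    define a where "a = fmap embX N'"
    define b where "b = fmap embY N'"
    define c where "c = fmap eval_sum2 N'"
    define t :: "complex poly poly fps" where "t = fps_X ^ n"
    have hl: "Hxy * (Hx + Hy - Hx * Hy) = Hx * Hy"
      using l by (simp add: Hmap Let_def Hx_def Hy_def Hxy_def)
    have Lxy': "fmap eval_sum2 L = Lx + Ly - 1" using Lxy[OF u0] by (simp add: L_def Lx_def Ly_def)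
    have e1: "(Hxy * fmap eval_sum2 L) * ((Hx * Lx) * Ly + (Hy * Ly) * Lx - (Hx * Lx) * (Hy * Ly))
         = (Hx * Lx) * (Hy * Ly) * fmap eval_sum2 L"
      by (rule alg2[OF hl])
    have mx: "Hx * Lx = 1 + t * a" using Mg[OF rhom_embX] by (simp add: Hx_def Lx_def t_def a_def)
    have my: "Hy * Ly = 1 + t * b" using Mg[OF rhom_embY] by (simp add: Hy_def Ly_def t_def b_def)
    have mxy: "Hxy * fmap eval_sum2 L = 1 + t * c" using Mg[OF rhom_eval_sum2] by (simp add: Hxy_def t_def c_def)
    have e2: "(1 + t * c) * ((1 + t * a) * Ly + (1 + t * b) * Lx - (1 + t * a) * (1 + t * b))
         - (1 + t * a) * (1 + t * b) * (Lx + Ly - 1) = 0"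
      using e1 unfolding mxy unfolding mx my Lxy' by (rule iffD1[OF eq_iff_diff_eq_0])
    define R where "R = - a * b + c * (a * Ly + b * Lx - a - b) - a * b * (Lx + Ly - 1) - t * a * b * c"
    have "t * (c * (Lx + Ly - 1) - a * Lx - b * Ly + t * R) = 0"
      using e2 alg3[of t c a Ly b Lx] by (simp add: R_def)
    moreover have "t \<noteq> 0" by (simp add: t_def)
    ultimately have e3: "c * (Lx + Ly - 1) - a * Lx - b * Ly + t * R = 0" by simp
    have L0: "L $ 0 = 1" by (simp add: L_def u0)
    have Lx0: "Lx $ 0 = 1" by (simp add: Lx_def L0 rhomD[OF rhom_embX])
    have Ly0: "Ly $ 0 = 1" by (simp add: Ly_def L0 rhomD[OF rhom_embY])
    have t0: "t $ 0 = 0" using n1 by (simp add: t_def)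
    have tR0: "(t * R) $ 0 = 0" using t0 by auto
    have "(c * (Lx + Ly - 1) - a * Lx - b * Ly + t * R) $ 0 = c $ 0 - a $ 0 - b $ 0"
      by (simp add: Lx0 Ly0 t0)
    with e3 have "c $ 0 = a $ 0 + b $ 0" by (simp add: algebra_simps)
    then have add: "eval_sum2 (M $ n) = embX (M $ n) + embY (M $ n)"
      by (simp add: a_def b_def c_def Nn)
    have "M $ n = 0"
    proof (rule poly_eqI)
      fix j
      show "coeff (M $ n) j = coeff 0 j"
      proof (cases "j = 1")
        case True
        have "coeff (M $ n) 1 = coeff (P n) 1 - (\<Sum>i\<le>n. u $ i * coeff (P (n - i)) 0)"
          by (simp add: M_def L_def HL_nth coeff_sum)
        also have "(\<Sum>i\<le>n. u $ i * coeff (P (n - i)) 0) = (\<Sum>i\<le>n. if i = n then u $ i else 0)"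
          by (rule sum.cong) (auto simp: coeff_P_0)
        also have "\<dots> = u $ n" by simp
        finally show ?thesis using True by (simp add: u_def pf_nth)
      next
        case False
        then show ?thesis using additive_poly[OF add] by simp
      qed
    qed
    with Nn0 show False by simp
  qed
  then have "Abs_fps P * (1 - Abs_fps (\<lambda>n. [:0, u $ n:])) = 1" by (simp add: M_def L_def)
  then show MULTF using cd_iff_MULTF u0 u1 by blast
qed

end

lemma nc_mult_Nil: "nc_mult p q [] = p [] * q []"
  by (simp add: nc_mult_def)

lemma nc_mult_Cons: "nc_mult p q (c # w) = p [] * q (c # w) + nc_mult (\<lambda>u. p (c # u)) q w"
  unfolding nc_mult_def length_Cons by (subst sum.atMost_Suc_shift) simp

lemma nc_mult_zero: "nc_mult (\<lambda>_. 0) q w = 0"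
  by (simp add: nc_mult_def)

lemma nc_mult_single: "nc_mult (\<lambda>u. if u = [] then a else 0) q w = a * q w"
  by (cases w) (simp_all add: nc_mult_Nil nc_mult_Cons nc_mult_zero)

lemma nc_var_mult: "nc_mult (nc_var b) q w = (case w of [] \<Rightarrow> 0 | c # w' \<Rightarrow> if c = b then q w' else 0)"
proof (cases w)
  case Nil then show ?thesis by (simp add: nc_mult_Nil nc_var_def)
next
  case (Cons c w')
  have "(\<lambda>u. nc_var b (c # u)) = (\<lambda>u. if u = [] then (if c = b then 1 else 0) else 0)"
    by (auto simp: nc_var_def fun_eq_iff)
  then show ?thesis using Cons by (simp add: nc_mult_Cons nc_var_def nc_mult_single)
qed

lemma nc_xy_mult: "nc_mult (nc_add (nc_var False) (nc_var True)) q w = (case w of [] \<Rightarrow> 0 | c # w' \<Rightarrow> q w')"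
proof (cases w)
  case Nil then show ?thesis by (simp add: nc_mult_Nil nc_var_def nc_add_def)
next
  case (Cons c w')
  have "(\<lambda>u. nc_add (nc_var False) (nc_var True) (c # u)) = (\<lambda>u. if u = [] then 1 else 0)"
    by (auto simp: nc_var_def nc_add_def fun_eq_iff)
  then show ?thesis using Cons by (simp add: nc_mult_Cons nc_var_def nc_add_def nc_mult_single)
qed

lemma nc_pow_var: "nc_pow (nc_var b) m w = (if w = replicate m b then 1 else 0)"
proof (induction m arbitrary: w)
  case 0 then show ?case by (simp add: nc_one_def)
next
  case (Suc m) then show ?case by (cases w) (auto simp: nc_var_mult)
qed

lemma nc_pow_xy: "nc_pow (nc_add (nc_var False) (nc_var True)) m w = (if length w = m then 1 else 0)"
proof (induction m arbitrary: w)
  case 0 then show ?case by (simp add: nc_one_def)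
next
  case (Suc m) then show ?case by (cases w) (auto simp: nc_xy_mult)
qed

lemma nc_sum_apply: "nc_sum S g w = (\<Sum>s\<in>S. g s w)" by (simp add: nc_sum_def)
lemma nc_smult_apply: "nc_smult c p w = c * p w" by (simp add: nc_smult_def)
lemma nc_add_apply: "nc_add p q w = p w + q w" by (simp add: nc_add_def)

lemma Delta_ast_apply: "Delta_ast f w = coeff f (length w)"
proof -
  have "Delta_ast f w = (\<Sum>n\<le>degree f. coeff f n * (if length w = n then 1 else 0))"
    unfolding Delta_ast_def nc_eval_def by (simp add: nc_sum_apply nc_smult_apply nc_pow_xy)
  also have "\<dots> = (\<Sum>n\<le>degree f. if n = length w then coeff f n else 0)"
    by (rule sum.cong) auto
  also have "\<dots> = coeff f (length w)"
    by (auto simp: coeff_eq_0)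
  finally show ?thesis .
qed

lemma nc_emb_apply: "nc_emb b f w = (if set w \<subseteq> {b} then coeff f (length w) else 0)"
proof -
  have "nc_emb b f w = (\<Sum>n\<le>degree f. coeff f n * (if w = replicate n b then 1 else 0))"
    unfolding nc_emb_def nc_eval_def by (simp add: nc_sum_apply nc_smult_apply nc_pow_var)
  also have "\<dots> = (\<Sum>n\<le>degree f. if w = replicate n b then coeff f n else 0)"
    by (rule sum.cong) auto
  also have "\<dots> = (\<Sum>n\<le>degree f. if n = length w \<and> set w \<subseteq> {b} then coeff f n else 0)"
    by (rule sum.cong) (auto simp: replicate_length_same[symmetric] intro: replicate_eqI)
  also have "\<dots> = (if set w \<subseteq> {b} then coeff f (length w) else 0)"
    by (auto simp: coeff_eq_0)
  finally show ?thesis .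
qed

fun mkword :: "bool \<Rightarrow> nat list \<Rightarrow> bool list" where
  "mkword b [] = []"
| "mkword b (l # ls) = replicate l b @ mkword (\<not> b) ls"

lemma length_mkword[simp]: "length (mkword b ls) = sum_list ls"
  by (induction ls arbitrary: b) auto

lemma mkword_hd: "ls \<noteq> [] \<Longrightarrow> \<forall>l\<in>set ls. l \<ge> 1 \<Longrightarrow> mkword b ls \<noteq> [] \<and> hd (mkword b ls) = b"
  by (cases ls) (auto simp: hd_append hd_replicate)

lemma mkword_start: "\<forall>l\<in>set ls. l \<ge> 1 \<Longrightarrow> mkword b ls = [] \<or> hd (mkword b ls) = b"
  using mkword_hd by (cases ls) auto

lemma tw_rep: "rest = [] \<or> hd rest \<noteq> b \<Longrightarrow> takeWhile (\<lambda>c. c = b) (replicate k b @ rest) = replicate k b"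
  by (induction k) (cases rest; auto)+

lemma dw_rep: "rest = [] \<or> hd rest \<noteq> b \<Longrightarrow> dropWhile (\<lambda>c. c = b) (replicate k b @ rest) = rest"
  by (induction k) (cases rest; auto)+

lemma word_img_mkword:
  assumes "\<forall>i\<in>set is. i \<ge> 1" and "\<forall>n. W (monom 1 n) = P n"
  shows "word_img W W (mkword b is) = alt_prod P b is"
  using assms(1)
proof (induction "is" arbitrary: b)
  case Nil then show ?case by simp
next
  case (Cons i r)
  define rest where "rest = mkword (\<not> b) r"
  have st: "rest = [] \<or> hd rest \<noteq> b" using mkword_start[of r "\<not> b"] Cons.prems by (auto simp: rest_def)
  obtain i' where i': "i = Suc i'" using Cons.prems by (cases i) auto
  have "mkword b (i # r) = b # (replicate i' b @ rest)" by (simp add: i' rest_def)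
  then have "word_img W W (mkword b (i # r))
      = nc_mult (nc_emb b (W (monom 1 (Suc i')))) (word_img W W rest)"
    by (simp add: tw_rep[OF st] dw_rep[OF st])
  also have "\<dots> = alt_prod P b (i # r)"
    using Cons assms(2) by (simp add: i' rest_def)
  finally show ?case .
qed

fun cprod :: "(nat \<Rightarrow> complex poly) \<Rightarrow> nat list \<Rightarrow> nat list \<Rightarrow> complex" where
  "cprod P [] [] = 1"
| "cprod P (i # is) (l # ls) = coeff (P i) l * cprod P is ls"
| "cprod P _ _ = 0"

lemma mkword_Nil_iff: "\<forall>l\<in>set ls. l \<ge> 1 \<Longrightarrow> mkword c ls = [] \<longleftrightarrow> ls = []"
  using mkword_hd[of ls c] by auto

lemma takeWhile_rep: "takeWhile (\<lambda>c. c = b) xs = replicate (length (takeWhile (\<lambda>c. c = b) xs)) b"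
  by (induction xs) auto

lemma dropWhile_start: "dropWhile (\<lambda>c. c = b) xs = [] \<or> hd (dropWhile (\<lambda>c. c = b) xs) = (\<not> b)"
  by (induction xs) auto

lemma mkword_exists: "\<exists>ls. (\<forall>l\<in>set ls. l \<ge> 1) \<and> w = mkword (hd w) ls"
proof (induction "length w" arbitrary: w rule: less_induct)
  case less
  show ?case
  proof (cases w)
    case Nil then show ?thesis by (intro exI[of _ "[]"]) simp
  next
    case (Cons b w')
    define k where "k = length (takeWhile (\<lambda>c. c = b) w')"
    define rest where "rest = dropWhile (\<lambda>c. c = b) w'"
    have "length rest < length w" using Cons by (simp add: rest_def le_imp_less_Suc length_dropWhile_le)
    then obtain ls' where ls': "\<forall>l\<in>set ls'. l \<ge> 1" "rest = mkword (hd rest) ls'" using less by blast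
    have r: "rest = mkword (\<not> b) ls'"
    proof (cases "rest = []")
      case True
      then have "ls' = []" using ls' mkword_Nil_iff by metis
      then show ?thesis using True by simp
    next
      case False
      then have "hd rest = (\<not> b)" using dropWhile_start[of b w'] unfolding rest_def by blast
      then show ?thesis using ls' by simp
    qed
    have "w = b # (takeWhile (\<lambda>c. c = b) w' @ rest)" by (simp add: Cons rest_def)
    also have "\<dots> = mkword b (Suc k # ls')"
      using takeWhile_rep[of b w'] r by (simp add: k_def)
    finally show ?thesis using ls' Cons by (intro exI[of _ "Suc k # ls'"]) simp
  qed
qed

context psetup begin

lemma alt_eval:
  assumes "\<forall>i\<in>set is. i \<ge> 1" and "\<forall>l\<in>set ls. l \<ge> 1"
  shows "alt_prod P b is (mkword c ls) =
           (if length is = length ls \<and> (ls \<noteq> [] \<longrightarrow> b = c) then cprod P is ls else 0)"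
  using assms
proof (induction "is" arbitrary: b c ls)
  case Nil
  then show ?case by (auto simp: nc_one_def mkword_Nil_iff)
next
  case (Cons i r)
  have i1: "i \<ge> 1" and r1: "\<forall>i\<in>set r. i \<ge> 1" using Cons.prems by auto
  have Pi0: "coeff (P i) 0 = 0" using i1 by (simp add: coeff_P_0)
  show ?case
  proof (cases ls)
    case Nil
    then show ?thesis by (simp add: nc_mult_Nil nc_emb_apply Pi0)
  next
    case (Cons l ls')
    have l1: "l \<ge> 1" and ls1: "\<forall>l\<in>set ls'. l \<ge> 1" using Cons.prems \<open>ls = l # ls'\<close> by auto
    define rest where "rest = mkword (\<not> c) ls'"
    have v: "mkword c ls = replicate l c @ rest" by (simp add: Cons rest_def)
    have st: "rest = [] \<or> hd rest = (\<not> c)" using mkword_start[OF ls1, of "\<not> c"] by (simp add: rest_def)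
    define T where "T t = nc_emb b (P i) (take t (mkword c ls)) * alt_prod P (\<not> b) r (drop t (mkword c ls))" for t
    have Tl: "T l = (if b = c then coeff (P i) l else 0) *
        (if length r = length ls' \<and> (ls' \<noteq> [] \<longrightarrow> (\<not> b) = (\<not> c)) then cprod P r ls' else 0)"
      using Cons.IH[OF r1 ls1, of "\<not> b" "\<not> c"] l1
      by (auto simp: T_def v nc_emb_apply rest_def)
    have Tt: "T t = 0" if "t \<noteq> l" "t \<le> length (mkword c ls)" for t
    proof (cases "t < l")
      case True
      show ?thesis
      proof (cases "t = 0")
        case True then show ?thesis by (simp add: T_def nc_emb_apply Pi0)
      next
        case False
        have tk: "take t (mkword c ls) = replicate t c" using \<open>t < l\<close> by (simp add: v)
        have dr: "drop t (mkword c ls) = mkword c ((l - t) # ls')" using \<open>t < l\<close>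
          by (simp add: v rest_def)
        have "alt_prod P (\<not> b) r (mkword c ((l - t) # ls')) = 0" if "b = c"
          using Cons.IH[OF r1, of "(l - t) # ls'" "\<not> b" c] ls1 \<open>t < l\<close> that by auto
        then show ?thesis using False by (auto simp: T_def tk dr nc_emb_apply)
      qed
    next
      case False
      then have "t > l" using that by simp
      have "rest \<noteq> []" using that \<open>t > l\<close> by (auto simp: v)
      then have hr: "hd rest = (\<not> c)" using st by simp
      have "take t (mkword c ls) = replicate l c @ take (t - l) rest" using \<open>t > l\<close> by (simp add: v)
      moreover have "c \<in> set (replicate l c)" using l1 by simp
      moreover have "(\<not> c) \<in> set (take (t - l) rest)"
        using \<open>rest \<noteq> []\<close> \<open>t > l\<close> hr by (cases rest; cases "t - l") auto
      ultimately have "\<not> set (take t (mkword c ls)) \<subseteq> {b}" by auto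
      then show ?thesis by (simp add: T_def nc_emb_apply)
    qed
    have "alt_prod P b (i # r) (mkword c ls) = (\<Sum>t\<le>length (mkword c ls). T t)"
      by (simp add: nc_mult_def T_def)
    also have "\<dots> = (\<Sum>t\<le>length (mkword c ls). if t = l then T l else 0)"
      by (rule sum.cong) (auto simp: Tt)
    also have "\<dots> = T l" using l1 by (simp add: v)
    also have "\<dots> = (if length (i # r) = length ls \<and> (ls \<noteq> [] \<longrightarrow> b = c) then cprod P (i # r) ls else 0)"
      by (auto simp: Tl Cons)
    finally show ?thesis .
  qed
qed

end

definition comps :: "nat \<Rightarrow> nat \<Rightarrow> nat list set" where
  "comps k n = {is. length is = k \<and> (\<forall>i\<in>set is. i \<ge> 1) \<and> sum_list is = n}"

lemma sum_list_ge_length: "\<forall>i\<in>set is. (i::nat) \<ge> 1 \<Longrightarrow> sum_list is \<ge> length is"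
  by (induction "is") auto

lemma finite_comps: "finite (comps k n)"
proof (rule finite_subset)
  show "comps k n \<subseteq> {xs. set xs \<subseteq> {0..n} \<and> length xs = k}"
    by (auto simp: comps_def intro: member_le_sum_list[THEN order.trans])
  show "finite {xs. set xs \<subseteq> {0..n} \<and> length xs = k}"
    by (rule finite_lists_length_eq) simp
qed

lemma comps_empty: "k > n \<Longrightarrow> comps k n = {}"
  using sum_list_ge_length by (fastforce simp: comps_def)

lemma comps_0: "comps 0 n = (if n = 0 then {[]} else {})"
  by (auto simp: comps_def)

lemma comps_Suc: "comps (Suc r) n = (\<lambda>(i, is). i # is) ` (SIGMA i:{1..n}. comps r (n - i))"
proof (rule set_eqI)
  fix xs
  show "xs \<in> comps (Suc r) n \<longleftrightarrow> xs \<in> (\<lambda>(i, is). i # is) ` (SIGMA i:{1..n}. comps r (n - i))"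
  proof
    assume "xs \<in> comps (Suc r) n"
    then obtain i "is" where xs: "xs = i # is" and h: "length is = r" "i \<ge> 1" "\<forall>j\<in>set is. j \<ge> 1"
        "i + sum_list is = n"
      by (cases xs) (auto simp: comps_def)
    then have "(i, is) \<in> (SIGMA i:{1..n}. comps r (n - i))" by (auto simp: comps_def)
    then show "xs \<in> (\<lambda>(i, is). i # is) ` (SIGMA i:{1..n}. comps r (n - i))" using xs by force
  next
    assume "xs \<in> (\<lambda>(i, is). i # is) ` (SIGMA i:{1..n}. comps r (n - i))"
    then show "xs \<in> comps (Suc r) n" by (auto simp: comps_def)
  qed
qed

lemma sum_comps_Suc:
  "(\<Sum>is\<in>comps (Suc r) n. g is) = (\<Sum>i\<in>{1..n}. \<Sum>is\<in>comps r (n - i). g (i # is))"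
proof -
  have inj: "inj_on (\<lambda>(i, is). i # is) (SIGMA i:{1..n}. comps r (n - i))"
    by (auto simp: inj_on_def)
  have "(\<Sum>is\<in>comps (Suc r) n. g is) = (\<Sum>x\<in>(SIGMA i:{1..n}. comps r (n - i)). g ((\<lambda>(i, is). i # is) x))"
    unfolding comps_Suc by (subst sum.reindex[OF inj]) (simp add: comp_def)
  also have "\<dots> = (\<Sum>i\<in>{1..n}. \<Sum>is\<in>comps r (n - i). g (i # is))"
    by (subst sum.Sigma) (auto simp: finite_comps split_def)
  finally show ?thesis .
qed

context psetup begin

lemma compsum:
  assumes "\<forall>l\<in>set ls. l \<ge> 1"
  shows "(prod_list (map (pf P) ls)) $ n = (\<Sum>is\<in>comps (length ls) n. cprod P is ls)"
  using assms
proof (induction ls arbitrary: n)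
  case Nil then show ?case by (simp add: comps_0)
next
  case (Cons l ls')
  have l1: "l \<ge> 1" and ls1: "\<forall>l\<in>set ls'. l \<ge> 1" using Cons.prems by auto
  have "(prod_list (map (pf P) (l # ls'))) $ n = (\<Sum>i=0..n. coeff (P i) l * (prod_list (map (pf P) ls')) $ (n - i))"
    by (simp add: fps_mult_nth pf_nth)
  also have "\<dots> = (\<Sum>i\<in>{1..n}. coeff (P i) l * (prod_list (map (pf P) ls')) $ (n - i))"
  proof (rule sum.mono_neutral_right)
    show "\<forall>i\<in>{0..n} - {1..n}. coeff (P i) l * prod_list (map (pf P) ls') $ (n - i) = 0"
      using l1 by (auto simp: coeff_P_gt)
  qed auto
  also have "\<dots> = (\<Sum>i\<in>{1..n}. \<Sum>is\<in>comps (length ls') (n - i). cprod P (i # is) (l # ls'))"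
    by (simp add: Cons.IH[OF ls1] sum_distrib_left)
  also have "\<dots> = (\<Sum>is\<in>comps (length (l # ls')) n. cprod P is (l # ls'))"
    by (simp add: sum_comps_Suc)
  finally show ?case .
qed

definition RK :: "nat \<Rightarrow> ncpoly" where
  "RK n = nc_sum {1..n} (\<lambda>k. nc_sum (comps k n) (\<lambda>is. nc_add (alt_prod P False is) (alt_prod P True is)))"

lemma RK_eval:
  assumes ls1: "\<forall>l\<in>set ls. l \<ge> 1"
  shows "RK n (mkword c ls) = (if ls = [] then 0 else (\<Sum>is\<in>comps (length ls) n. cprod P is ls))"
proof -
  have inner: "nc_add (alt_prod P False is) (alt_prod P True is) (mkword c ls)
      = (if ls \<noteq> [] \<and> k = length ls then cprod P is ls else 0)" if "is \<in> comps k n" "k \<ge> 1" for k "is"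
  proof -
    have is1: "\<forall>i\<in>set is. i \<ge> 1" and lk: "length is = k" using that by (auto simp: comps_def)
    show ?thesis using alt_eval[OF is1 ls1, of False c] alt_eval[OF is1 ls1, of True c] lk that(2)
      by (cases c) (auto simp: nc_add_apply)
  qed
  have "RK n (mkword c ls) = (\<Sum>k\<in>{1..n}. \<Sum>is\<in>comps k n. if ls \<noteq> [] \<and> k = length ls then cprod P is ls else 0)"
    unfolding RK_def nc_sum_apply by (rule sum.cong[OF refl], rule sum.cong[OF refl]) (simp add: inner)
  also have "\<dots> = (\<Sum>k\<in>{1..n}. if k = length ls then (if ls = [] then 0 else (\<Sum>is\<in>comps k n. cprod P is ls)) else 0)"
    by (rule sum.cong) auto
  also have "\<dots> = (if length ls \<in> {1..n} then (if ls = [] then 0 else (\<Sum>is\<in>comps (length ls) n. cprod P is ls)) else 0)"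
    by simp
  also have "\<dots> = (if ls = [] then 0 else (\<Sum>is\<in>comps (length ls) n. cprod P is ls))"
    by (auto simp: comps_empty Suc_le_eq)
  finally show ?thesis .
qed

definition KR where
  "KR \<longleftrightarrow> (\<forall>n\<ge>1. \<forall>ls. (\<forall>l\<in>set ls. l \<ge> 1) \<and> ls \<noteq> [] \<longrightarrow>
      coeff (P n) (sum_list ls) = (\<Sum>is\<in>comps (length ls) n. cprod P is ls))"

lemma ck_iff_KR: "(\<forall>n\<ge>1. Delta_ast (P n) = RK n) \<longleftrightarrow> KR"
proof
  assume h: "\<forall>n\<ge>1. Delta_ast (P n) = RK n"
  show KR unfolding KR_def
  proof (intro allI impI)
    fix n :: nat and ls :: "nat list"
    assume n: "n \<ge> 1" and ls: "(\<forall>l\<in>set ls. l \<ge> 1) \<and> ls \<noteq> []"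
    have "Delta_ast (P n) (mkword True ls) = RK n (mkword True ls)" using h n by simp
    then show "coeff (P n) (sum_list ls) = (\<Sum>is\<in>comps (length ls) n. cprod P is ls)"
      using ls by (simp add: Delta_ast_apply RK_eval)
  qed
next
  assume k: KR
  show "\<forall>n\<ge>1. Delta_ast (P n) = RK n"
  proof (intro allI impI ext)
    fix n :: nat and v
    assume n: "n \<ge> 1"
    obtain c ls where ls: "\<forall>l\<in>set ls. l \<ge> 1" "v = mkword c ls" using mkword_exists by blast
    show "Delta_ast (P n) v = RK n v"
    proof (cases "ls = []")
      case True
      then show ?thesis using ls n RK_eval[of "[]" n c] by (simp add: Delta_ast_apply coeff_P_0)
    next
      case False
      then show ?thesis using ls(1) n k unfolding KR_def ls(2)
        by (simp add: Delta_ast_apply RK_eval)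
    qed
  qed
qed

lemma MULTF_prod: "MULTF \<Longrightarrow> pf P (sum_list ls) = prod_list (map (pf P) ls)"
  by (induction ls) (auto simp: pf0 MULTF_def)

lemma KR_iff_MULTF: "KR \<longleftrightarrow> MULTF"
proof -
  have KR': "KR \<longleftrightarrow> (\<forall>ls. (\<forall>l\<in>set ls. l \<ge> 1) \<and> ls \<noteq> [] \<longrightarrow> pf P (sum_list ls) = prod_list (map (pf P) ls))"
  proof -
    have z: "pf P (sum_list ls) $ 0 = prod_list (map (pf P) ls) $ 0"
      if "\<forall>l\<in>set ls. l \<ge> 1" "ls \<noteq> []" for ls
    proof -
      have "length ls \<ge> 1" using that by (cases ls) auto
      then have s1: "sum_list ls \<ge> 1" using sum_list_ge_length[OF that(1)] by simp
      have "comps (length ls) 0 = {}" by (rule comps_empty) (use \<open>length ls \<ge> 1\<close> in linarith)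
      then have "prod_list (map (pf P) ls) $ 0 = 0" using compsum[OF that(1), of 0] by simp
      moreover have "pf P (sum_list ls) $ 0 = 0" unfolding pf_nth using s1 by (intro coeff_P_gt) simp
      ultimately show ?thesis by simp
    qed
    show ?thesis unfolding KR_def
    proof (intro iffI allI impI)
      fix ls :: "nat list"
      assume h: "\<forall>n\<ge>1. \<forall>ls. (\<forall>l\<in>set ls. 1 \<le> l) \<and> ls \<noteq> [] \<longrightarrow>
              coeff (P n) (sum_list ls) = (\<Sum>is\<in>comps (length ls) n. cprod P is ls)"
        and ls: "(\<forall>l\<in>set ls. 1 \<le> l) \<and> ls \<noteq> []"
      show "pf P (sum_list ls) = prod_list (map (pf P) ls)"
      proof (rule fps_ext)
        fix n show "pf P (sum_list ls) $ n = prod_list (map (pf P) ls) $ n"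
          using h ls z[of ls] compsum[of ls n] by (cases "n = 0") (auto simp: pf_nth)
      qed
    next
      fix n :: nat and ls :: "nat list"
      assume h: "\<forall>ls. (\<forall>l\<in>set ls. 1 \<le> l) \<and> ls \<noteq> [] \<longrightarrow> pf P (sum_list ls) = prod_list (map (pf P) ls)"
        and "1 \<le> n" and ls: "(\<forall>l\<in>set ls. 1 \<le> l) \<and> ls \<noteq> []"
      show "coeff (P n) (sum_list ls) = (\<Sum>is\<in>comps (length ls) n. cprod P is ls)"
        using h ls compsum[of ls n] by (simp add: pf_nth[symmetric])
    qed
  qed
  show ?thesis
  proof
    assume KR
    then have h: "\<forall>ls. (\<forall>l\<in>set ls. l \<ge> 1) \<and> ls \<noteq> [] \<longrightarrow> pf P (sum_list ls) = prod_list (map (pf P) ls)"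
      using KR' by blast
    show MULTF unfolding MULTF_def
    proof (intro allI)
      fix i j
      show "pf P (i + j) = pf P i * pf P j"
      proof (cases "i = 0 \<or> j = 0")
        case True then show ?thesis by (auto simp: pf0)
      next
        case False
        then show ?thesis using h[rule_format, of "[i, j]"] by simp
      qed
    qed
  next
    assume MULTF
    then show KR using KR' MULTF_prod by blast
  qed
qed

end

lemma mkword_inj:
  assumes "\<forall>i\<in>set is. i \<ge> 1" "\<forall>i\<in>set is'. i \<ge> 1" "mkword b is = mkword b is'"
  shows "is = is'"
  using assms
proof (induction "is" arbitrary: b is')
  case Nil then show ?case using mkword_Nil_iff by metis
next
  case (Cons i r)
  have r1: "\<forall>i\<in>set r. i \<ge> 1" and i1: "i \<ge> 1" using Cons.prems by auto
  have "is' \<noteq> []" using Cons.prems mkword_Nil_iff[of "i # r" b] by auto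
  then obtain i' r' where is': "is' = i' # r'" by (cases is') auto
  have r1': "\<forall>i\<in>set r'. i \<ge> 1" using Cons.prems is' by auto
  define R where "R = mkword (\<not> b) r"
  define R' where "R' = mkword (\<not> b) r'"
  have sR: "R = [] \<or> hd R \<noteq> b" using mkword_start[OF r1, of "\<not> b"] by (auto simp: R_def)
  have sR': "R' = [] \<or> hd R' \<noteq> b" using mkword_start[OF r1', of "\<not> b"] by (auto simp: R'_def)
  have eq: "replicate i b @ R = replicate i' b @ R'" using Cons.prems is' by (simp add: R_def R'_def)
  have "replicate i b = replicate i' b"
    using arg_cong[OF eq, of "takeWhile (\<lambda>c. c = b)"] tw_rep[OF sR] tw_rep[OF sR'] by simp
  then have ii: "i = i'" by (metis length_replicate)
  have "R = R'"
    using arg_cong[OF eq, of "dropWhile (\<lambda>c. c = b)"] dw_rep[OF sR] dw_rep[OF sR'] by simp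
  then have "r = r'" using Cons.IH[OF r1 r1'] by (simp add: R_def R'_def)
  then show ?case using ii is' by simp
qed

definition CC :: "nat \<Rightarrow> nat list set" where
  "CC m = {is. (\<forall>i\<in>set is. i \<ge> 1) \<and> sum_list is = m}"

lemma CC_union: "m \<ge> 1 \<Longrightarrow> CC m = (\<Union>k\<in>{1..m}. comps k m)"
proof (rule set_eqI)
  fix xs assume m: "m \<ge> 1"
  show "xs \<in> CC m \<longleftrightarrow> xs \<in> (\<Union>k\<in>{1..m}. comps k m)"
  proof
    assume h: "xs \<in> CC m"
    then have "length xs \<le> m" using sum_list_ge_length[of xs] by (auto simp: CC_def)
    moreover have "xs \<noteq> []" using h m by (auto simp: CC_def)
    ultimately show "xs \<in> (\<Union>k\<in>{1..m}. comps k m)" using h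
      by (auto simp: CC_def comps_def Suc_le_eq intro!: bexI[of _ "length xs"])
  qed (auto simp: CC_def comps_def)
qed

lemma sum_CC: "m \<ge> 1 \<Longrightarrow> (\<Sum>is\<in>CC m. h is) = (\<Sum>k\<in>{1..m}. \<Sum>is\<in>comps k m. h is)"
  unfolding CC_union
  apply (rule sum.UNION_disjoint)
    apply simp
   apply (simp add: finite_comps)
  apply (auto simp: comps_def)
  done

lemma finite_CC: "finite (CC m)"
proof (rule finite_subset)
  show "CC m \<subseteq> (\<Union>k\<in>{..m}. comps k m)"
    using sum_list_ge_length by (fastforce simp: CC_def comps_def)
qed (auto simp: finite_comps)

lemma bij_mkword:
  assumes m: "m \<ge> 1"
  shows "bij_betw (\<lambda>(b, is). mkword b is) (UNIV \<times> CC m) {w. length w = m}"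
proof (rule bij_betwI')
  fix x y :: "bool \<times> nat list" assume x: "x \<in> UNIV \<times> CC m" and y: "y \<in> UNIV \<times> CC m"
  obtain b "is" where xb: "x = (b, is)" by (cases x)
  obtain b' is' where yb: "y = (b', is')" by (cases y)
  have is1: "\<forall>i\<in>set is. i \<ge> 1" "is \<noteq> []" using x m by (auto simp: xb CC_def)
  have is1': "\<forall>i\<in>set is'. i \<ge> 1" "is' \<noteq> []" using y m by (auto simp: yb CC_def)
  show "((\<lambda>(b, is). mkword b is) x = (\<lambda>(b, is). mkword b is) y) = (x = y)"
  proof
    assume e: "(\<lambda>(b, is). mkword b is) x = (\<lambda>(b, is). mkword b is) y"
    then have "b = b'" using mkword_hd[OF is1(2) is1(1), of b] mkword_hd[OF is1'(2) is1'(1), of b']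
      by (simp add: xb yb)
    then show "x = y" using e mkword_inj[OF is1(1) is1'(1)] by (simp add: xb yb)
  qed simp
next
  fix x :: "bool \<times> nat list" assume "x \<in> UNIV \<times> CC m"
  then show "(\<lambda>(b, is). mkword b is) x \<in> {w. length w = m}" by (auto simp: CC_def)
next
  fix w :: "bool list" assume w: "w \<in> {w. length w = (m::nat)}"
  obtain ls where ls: "\<forall>l\<in>set ls. l \<ge> 1" "w = mkword (hd w) ls" using mkword_exists by blast
  then have "sum_list ls = m" using w by (metis length_mkword mem_Collect_eq)
  then show "\<exists>x\<in>UNIV \<times> CC m. w = (\<lambda>(b, is). mkword b is) x"
    using ls by (intro bexI[of _ "(hd w, ls)"]) (auto simp: CC_def)
qed

context psetup begin

definition TT :: "nat \<Rightarrow> ncpoly" where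
  "TT m v = (\<Sum>w\<in>{w. length w = m}. word_img W W w v)"

lemma finite_len_eq: "finite {w :: bool list. length w = m}"
  using finite_lists_length_eq[of "UNIV :: bool set" m] by simp

lemma free_op_Delta_ast:
  "free_op W W (Delta_ast f) v = (\<Sum>m\<le>degree f. coeff f m * TT m v)"
proof -
  define N where "N = degree f"
  define B where "B = (\<Union>m\<in>{..N}. {w :: bool list. length w = m})"
  have fB: "finite B" by (auto simp: B_def finite_len_eq)
  have "free_op W W (Delta_ast f) v = (\<Sum>w\<in>{w. Delta_ast f w \<noteq> 0}. Delta_ast f w * word_img W W w v)"
    by (simp add: free_op_def nc_sum_apply nc_smult_apply)
  also have "\<dots> = (\<Sum>w\<in>B. Delta_ast f w * word_img W W w v)"
  proof (rule sum.mono_neutral_left[OF fB])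
    show "{w. Delta_ast f w \<noteq> 0} \<subseteq> B"
      by (auto simp: B_def N_def Delta_ast_apply intro: le_degree)
  qed auto
  also have "\<dots> = (\<Sum>m\<le>N. \<Sum>w\<in>{w. length w = m}. Delta_ast f w * word_img W W w v)"
    unfolding B_def by (rule sum.UNION_disjoint) (auto simp: finite_len_eq)
  also have "\<dots> = (\<Sum>m\<le>N. coeff f m * TT m v)"
    by (simp add: TT_def Delta_ast_apply sum_distrib_left)
  finally show ?thesis by (simp add: N_def)
qed

lemma Delta_ast_W:
  "Delta_ast (W f) v = (\<Sum>m\<le>degree f. coeff f m * coeff (P m) (length v))"
proof -
  have f: "f = (\<Sum>m\<le>degree f. smult (coeff f m) (monom 1 m))"
    using poly_as_sum_of_monoms[of f] by (simp add: smult_monom)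
  have "W f = (\<Sum>m\<le>degree f. smult (coeff f m) (P m))"
    by (subst f) (simp add: lin_op_sum_smult[OF W_lin] W_mon)
  then show ?thesis by (simp add: Delta_ast_apply coeff_sum)
qed

lemma cj_iff_TT: "(\<forall>f. Delta_ast (W f) = free_op W W (Delta_ast f)) \<longleftrightarrow> (\<forall>m v. coeff (P m) (length v) = TT m v)"
proof
  assume h: "\<forall>f. Delta_ast (W f) = free_op W W (Delta_ast f)"
  show "\<forall>m v. coeff (P m) (length v) = TT m v"
  proof (intro allI)
    fix m v
    have "Delta_ast (W (monom 1 m)) v = free_op W W (Delta_ast (monom 1 m)) v" using h by simp
    moreover have "(\<Sum>i\<le>m. coeff (monom 1 m) i * TT i v) = TT m v"
      by (subst sum.cong[where h="\<lambda>i. if i = m then TT i v else 0"]) (auto simp: coeff_monom)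
    moreover have "degree (monom (1::complex) m) = m" by (simp add: degree_monom_eq)
    ultimately show "coeff (P m) (length v) = TT m v"
      by (simp only: free_op_Delta_ast W_mon Delta_ast_apply)
  qed
next
  assume h: "\<forall>m v. coeff (P m) (length v) = TT m v"
  show "\<forall>f. Delta_ast (W f) = free_op W W (Delta_ast f)"
    by (intro allI ext) (simp add: free_op_Delta_ast Delta_ast_W h)
qed

lemma TT_0: "TT 0 v = coeff (P 0) (length v)"
  by (simp add: TT_def nc_one_def)

lemma TT_RK: "m \<ge> 1 \<Longrightarrow> TT m v = RK m v"
proof -
  assume m: "m \<ge> 1"
  have "TT m v = (\<Sum>x\<in>UNIV \<times> CC m. word_img W W ((\<lambda>(b, is). mkword b is) x) v)"
    unfolding TT_def by (rule sum.reindex_bij_betw[OF bij_mkword[OF m], symmetric])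
  also have "\<dots> = (\<Sum>x\<in>UNIV \<times> CC m. alt_prod P (fst x) (snd x) v)"
  proof (rule sum.cong[OF refl])
    fix x :: "bool \<times> nat list" assume "x \<in> UNIV \<times> CC m"
    then have "\<forall>i\<in>set (snd x). i \<ge> 1" by (auto simp: CC_def)
    then show "word_img W W ((\<lambda>(b, is). mkword b is) x) v = alt_prod P (fst x) (snd x) v"
      using word_img_mkword[OF _ W_mon, of "snd x" "fst x"] by (simp add: split_beta)
  qed
  also have "\<dots> = (\<Sum>b\<in>UNIV. \<Sum>is\<in>CC m. alt_prod P b is v)"
    by (simp add: sum.cartesian_product split_beta)
  also have "\<dots> = (\<Sum>is\<in>CC m. alt_prod P False is v + alt_prod P True is v)"
    by (simp add: UNIV_bool sum.distrib add.commute)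
  also have "\<dots> = RK m v"
    by (simp add: sum_CC[OF m] RK_def nc_sum_apply nc_add_apply)
  finally show ?thesis .
qed

lemma cj_iff_ck: "(\<forall>f. Delta_ast (W f) = free_op W W (Delta_ast f)) \<longleftrightarrow> (\<forall>n\<ge>1. Delta_ast (P n) = RK n)"
proof -
  have "(\<forall>m v. coeff (P m) (length v) = TT m v) \<longleftrightarrow> (\<forall>n\<ge>1. \<forall>v. coeff (P n) (length v) = RK n v)"
  proof
    assume "\<forall>m v. coeff (P m) (length v) = TT m v"
    then show "\<forall>n\<ge>1. \<forall>v. coeff (P n) (length v) = RK n v" using TT_RK by simp
  next
    assume h: "\<forall>n\<ge>1. \<forall>v. coeff (P n) (length v) = RK n v"
    show "\<forall>m v. coeff (P m) (length v) = TT m v"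
    proof (intro allI)
      fix m v show "coeff (P m) (length v) = TT m v"
        using h TT_RK[of m v] TT_0[of v] by (cases "m = 0") auto
    qed
  qed
  then show ?thesis using cj_iff_TT by (simp add: fun_eq_iff Delta_ast_apply)
qed

end

theorem proposition5p4:
  fixes P :: "nat \<Rightarrow> complex poly"
    and A W :: "complex poly \<Rightarrow> complex poly"
  assumes monic: "\<forall>n. degree (P n) = n \<and> lead_coeff (P n) = 1"
    and zero_at_0: "\<forall>n\<ge>1. poly (P n) 0 = 0"
    and A_lin: "lin_op A" and A_P0: "A (P 0) = 0" and A_P: "\<forall>n. A (P (Suc n)) = P n"
    and W_lin: "lin_op W" and W_mon: "\<forall>n. W (monom 1 n) = P n"
  defines "H \<equiv> Abs_fps P"
  shows
   "let
      ca = (\<forall>f. Delta (W f) = tens W W (Delta f));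
      cb = (\<forall>n. Delta (P n) = (\<Sum>k\<le>n. embX (P k) * embY (P (n - k))));
      cc = (Abs_fps (\<lambda>n. Delta (P n)) = Abs_fps (\<lambda>n. embX (P n)) * Abs_fps (\<lambda>n. embY (P n)));
      cd = (\<exists>u::complex fps. u $ 0 = 0 \<and> u $ 1 = 1 \<and>
              H * (1 - Abs_fps (\<lambda>n. [:0, u $ n:])) = 1);
      ce = (\<exists>u::complex fps. u $ 0 = 0 \<and> u $ 1 = 1 \<and>
              Abs_fps (\<lambda>n. Dop (P n)) = Abs_fps (\<lambda>n. [:u $ n:]) * H);
      cf = (\<exists>u::complex fps. u $ 0 = 0 \<and> u $ 1 = 1 \<and> A = fps_op (fps_inv u) Dop);
      cg = (A \<circ> Dop = Dop \<circ> A);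
      ch = (\<forall>a::real. A \<circ> Eop a = Eop a \<circ> A);
      ci = (\<forall>f. tens A id (Delta f) = Delta (A f));
      cj = (\<forall>f. Delta_ast (W f) = free_op W W (Delta_ast f));
      ck = (\<forall>n\<ge>1. Delta_ast (P n) =
              nc_sum {1..n} (\<lambda>k. nc_sum {is. length is = k \<and> (\<forall>i\<in>set is. i \<ge> 1) \<and> sum_list is = n}
                 (\<lambda>is. nc_add (alt_prod P False is) (alt_prod P True is))));
      cl = (let Hx = Abs_fps (\<lambda>n. embX (P n)); Hy = Abs_fps (\<lambda>n. embY (P n));
                Hxy = Abs_fps (\<lambda>n. eval_sum2 (P n))
            in Hxy * (Hx + Hy - Hx * Hy) = Hx * Hy)
    in (ca \<longleftrightarrow> cb) \<and> (ca \<longleftrightarrow> cc) \<and> (ca \<longleftrightarrow> cd) \<and> (ca \<longleftrightarrow> ce) \<and> (ca \<longleftrightarrow> cf)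
       \<and> (ca \<longleftrightarrow> cg) \<and> (ca \<longleftrightarrow> ch) \<and> (ca \<longleftrightarrow> ci) \<and> (ca \<longleftrightarrow> cj) \<and> (ca \<longleftrightarrow> ck)
       \<and> (ca \<longleftrightarrow> cl)"
proof -
  interpret psetup P A W
    using monic zero_at_0 A_lin A_P0 A_P W_lin W_mon unfolding psetup_def by blast
  have RKeq: "(\<forall>n\<ge>1. Delta_ast (P n) =
              nc_sum {1..n} (\<lambda>k. nc_sum {is. length is = k \<and> (\<forall>i\<in>set is. i \<ge> 1) \<and> sum_list is = n}
                 (\<lambda>is. nc_add (alt_prod P False is) (alt_prod P True is))))
        \<longleftrightarrow> (\<forall>n\<ge>1. Delta_ast (P n) = RK n)"
    by (simp add: RK_def comps_def)
  have cb: "(\<forall>n. Delta (P n) = (\<Sum>k\<le>n. embX (P k) * embY (P (n - k)))) \<longleftrightarrow> MULTF"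
    by (rule cb_iff_MULTF)
  have ca: "(\<forall>f. Delta (W f) = tens W W (Delta f)) \<longleftrightarrow> MULTF"
    using ca_iff_cb cb by blast
  have cg: "A \<circ> Dop = Dop \<circ> A \<longleftrightarrow> MULTF" using MULTF_cg cg_MULTF by blast
  have cf: "(\<exists>u::complex fps. u $ 0 = 0 \<and> u $ 1 = 1 \<and> A = fps_op (fps_inv u) Dop) \<longleftrightarrow> MULTF"
    using MULTF_cf cf_cg cg by blast
  have ck: "(\<forall>n\<ge>1. Delta_ast (P n) =
              nc_sum {1..n} (\<lambda>k. nc_sum {is. length is = k \<and> (\<forall>i\<in>set is. i \<ge> 1) \<and> sum_list is = n}
                 (\<lambda>is. nc_add (alt_prod P False is) (alt_prod P True is)))) \<longleftrightarrow> MULTF"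
    using RKeq ck_iff_KR KR_iff_MULTF by blast
  have cj: "(\<forall>f. Delta_ast (W f) = free_op W W (Delta_ast f)) \<longleftrightarrow> MULTF"
    using cj_iff_ck ck_iff_KR KR_iff_MULTF by blast
  have cl: "(let Hx = Abs_fps (\<lambda>n. embX (P n)); Hy = Abs_fps (\<lambda>n. embY (P n));
                Hxy = Abs_fps (\<lambda>n. eval_sum2 (P n))
            in Hxy * (Hx + Hy - Hx * Hy) = Hx * Hy) \<longleftrightarrow> MULTF"
    using MULTF_cl cl_MULTF by blast
  have cc: "(Abs_fps (\<lambda>n. Delta (P n)) = Abs_fps (\<lambda>n. embX (P n)) * Abs_fps (\<lambda>n. embY (P n))) \<longleftrightarrow> MULTF"
    using cc_iff_cb cb by blast
  have cd: "(\<exists>u::complex fps. u $ 0 = 0 \<and> u $ 1 = 1 \<and>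
              H * (1 - Abs_fps (\<lambda>n. [:0, u $ n:])) = 1) \<longleftrightarrow> MULTF"
    unfolding H_def by (rule cd_iff_MULTF)
  have ce: "(\<exists>u::complex fps. u $ 0 = 0 \<and> u $ 1 = 1 \<and>
              Abs_fps (\<lambda>n. Dop (P n)) = Abs_fps (\<lambda>n. [:u $ n:]) * H) \<longleftrightarrow> MULTF"
    unfolding H_def by (rule ce_iff_MULTF)
  have ch: "(\<forall>a::real. A \<circ> Eop a = Eop a \<circ> A) \<longleftrightarrow> MULTF" using ch_iff_cg cg by blast
  have ci: "(\<forall>f. tens A id (Delta f) = Delta (A f)) \<longleftrightarrow> MULTF" using ci_iff_cg cg by blast
  show ?thesis
    unfolding Let_def[of "\<forall>f. Delta (W f) = tens W W (Delta f)"]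
    by (simp only: ca cb cc cd ce cf cg ch ci cj ck cl simp_thms Let_def[of "\<forall>f. tens A id (Delta f) = Delta (A f)"]) (simp add: Let_def)
qed

end
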